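(* Let $\mathcal{F}^*$ be one of $\mathcal{F}^c,\mathcal{F}^{ev},\mathcal{F}^o$, let $\kappa=\kappa(H,\lambda,\alpha)$ be a nonsingular quadratic function in $\mathcal{F}^*$ and let $H_0$ be a direct summand of $H$ such that $\kappa_0:=\kappa|_{H_0}$ is nondegenerate. Then: 1. $H_1:=H_0^\perp=\{v\in H:\lambda(v,v_0)=0\ \forall v_0\in H_0\}$ is a direct summand of $H$; 2. $\kappa_1:=(\kappa|_{H_1})^-$ and $\kappa_0$ are nondegenerate members of $\mathcal{F}^*$; 3. there is an isometry $\theta_\kappa$ of the induced quadratic linking families $\delta^*(\kappa_0)\cong\delta^*(\kappa_1)$; 4. $\kappa$ is isometric to $\kappa_0\cup_{\theta_\kappa}\kappa_1^-$.
   Context: A quadratic function $\kappa(H,\lambda,\alpha)$: $H$ finitely generated free abelian, $\lambda$ symmetric bilinear into $\mathbb{Z}$, $\alpha\in H^*$, $\kappa(v)=\lambda(v,v)+\alpha(v)$; adjoint $\hat\lambda:H\to H^*$; nondegenerate if $\hat\lambda$ injective, nonsingular if bijective; $\kappa^-=\kappa(H,-\lambda,\alpha)$; restriction to a subgroup restricts $\lambda$ and $\alpha$. Families: $\mathcal{F}^c$ characteristic ($\lambda(v,v)+\alpha(v)$ even); $\mathcal{F}^{ev}$: $\lambda$ even; $\mathcal{F}^o$: $\lambda$ even, $\alpha=0$. For nondegenerate $\kappa_i=\kappa(H_i,\lambda_i,\alpha_i)$: $[x]$ is the class in $\mathrm{Cok}\,\hat\lambda_i$; $\lambda_i^{-1}(x,y)=y(v)/r$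 with $rx=\hat\lambda_i(v)$, $r\ne 0$; $q^{ev}(\kappa_i)([x])=\frac12\lambda_i^{-1}(x,x)$ (for $\mathcal{F}^{ev},\mathcal{F}^o$), $q^c(\kappa_i)([x])=\frac12(\lambda_i^{-1}(x,x)+\lambda_i^{-1}(x,\alpha_i))$ (for $\mathcal{F}^c$), mod $\mathbb{Z}$. An isometry $\delta^*(\kappa_0)\cong\delta^*(\kappa_1)$ is an isomorphism $\theta:\mathrm{Cok}\,\hat\lambda_0\to\mathrm{Cok}\,\hat\lambda_1$ with $\theta([\alpha_0])=[\alpha_1]$ and $q^*(\kappa_1)\circ\theta=q^*(\kappa_0)$. For such $\theta$, $\kappa_0\cup_\theta\kappa_1^-$ denotes $\kappa(H',\lambda',\alpha')$ with $H'=\{(x_0,x_1)\in H_0^*\oplus H_1^*:\theta[x_0]=[x_1]\}$, $\lambda'((x_0,x_1),(y_0,y_1))=\lambda_0^{-1}(x_0,y_0)-\lambda_1^{-1}(x_1,y_1)$, $\alpha'=\hat\lambda'((\alpha_0,\alpha_1))$. *)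

theory Defs
  imports Complex_Main "HOL-Library.Function_Algebras" "HOL-Library.Product_Plus" "HOL-Algebra.Group"
begin

text \<open>A quadratic function kappa(H, lambda, alpha) is represented by a subgroup H of an
  ambient abelian group type 'v together with functions lambda :: 'v => 'v => int and
  alpha :: 'v => int; only their values on H matter.\<close>

definition zsc :: "int \<Rightarrow> 'a::ab_group_add \<Rightarrow> 'a" where
  "zsc k v = (if 0 \<le> k then (\<Sum>i<nat k. v) else - (\<Sum>i<nat (- k). v))"

definition lincomb :: "'a::ab_group_add list \<Rightarrow> int list \<Rightarrow> 'a" where
  "lincomb b c = (\<Sum>i<length b. zsc (c ! i) (b ! i))"

definition fg_free :: "'a::ab_group_add set \<Rightarrow> bool" where
  "fg_free H \<longleftrightarrow> (\<exists>b::'a list.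
     (\<forall>v. v \<in> H \<longleftrightarrow> (\<exists>c. length c = length b \<and> v = lincomb b c)) \<and>
     (\<forall>c c'. length c = length b \<longrightarrow> length c' = length b \<longrightarrow>
              lincomb b c = lincomb b c' \<longrightarrow> c = c'))"

definition subgrp :: "'a::ab_group_add set \<Rightarrow> bool" where
  "subgrp S \<longleftrightarrow> 0 \<in> S \<and> (\<forall>x\<in>S. \<forall>y\<in>S. x + y \<in> S) \<and> (\<forall>x\<in>S. - x \<in> S)"

definition direct_summand :: "'a::ab_group_add set \<Rightarrow> 'a set \<Rightarrow> bool" where
  "direct_summand H0 H \<longleftrightarrow> subgrp H0 \<and> H0 \<subseteq> H \<and>
     (\<exists>K. subgrp K \<and> K \<subseteq> H \<and> H0 \<inter> K = {0} \<and> (\<forall>v\<in>H. \<exists>a\<in>H0. \<exists>b\<in>K. v = a + b))"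

definition is_qf :: "'a::ab_group_add set \<Rightarrow> ('a \<Rightarrow> 'a \<Rightarrow> int) \<Rightarrow> ('a \<Rightarrow> int) \<Rightarrow> bool" where
  "is_qf H lam alpha \<longleftrightarrow> fg_free H \<and>
     (\<forall>v\<in>H. \<forall>w\<in>H. lam v w = lam w v) \<and>
     (\<forall>u\<in>H. \<forall>v\<in>H. \<forall>w\<in>H. lam (u + v) w = lam u w + lam v w) \<and>
     (\<forall>v\<in>H. \<forall>w\<in>H. alpha (v + w) = alpha v + alpha w)"

text \<open>The dual H^* = Hom(H, Z), elements normalised to be 0 outside H.\<close>
definition dual :: "'a::ab_group_add set \<Rightarrow> ('a \<Rightarrow> int) set" where
  "dual H = {f. (\<forall>x\<in>H. \<forall>y\<in>H. f (x + y) = f x + f y) \<and> (\<forall>x. x \<notin> H \<longrightarrow> f x = 0)}"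

definition dual_of :: "'a set \<Rightarrow> ('a \<Rightarrow> int) \<Rightarrow> ('a \<Rightarrow> int)" where
  "dual_of H f = (\<lambda>w. if w \<in> H then f w else 0)"

definition adj :: "'a set \<Rightarrow> ('a \<Rightarrow> 'a \<Rightarrow> int) \<Rightarrow> 'a \<Rightarrow> ('a \<Rightarrow> int)" where
  "adj H lam v = dual_of H (lam v)"

definition nondeg :: "'a::ab_group_add set \<Rightarrow> ('a \<Rightarrow> 'a \<Rightarrow> int) \<Rightarrow> bool" where
  "nondeg H lam \<longleftrightarrow> (\<forall>v\<in>H. adj H lam v = 0 \<longrightarrow> v = 0)"

definition nonsing :: "'a::ab_group_add set \<Rightarrow> ('a \<Rightarrow> 'a \<Rightarrow> int) \<Rightarrow> bool" where
  "nonsing H lam \<longleftrightarrow> nondeg H lam \<and> (\<forall>f\<in>dual H. \<exists>v\<in>H. adj H lam v = f)"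

definition neg_form :: "('a \<Rightarrow> 'a \<Rightarrow> int) \<Rightarrow> ('a \<Rightarrow> 'a \<Rightarrow> int)" where
  "neg_form lam = (\<lambda>v w. - lam v w)"

datatype family = Fc | Fev | Fo

definition in_family :: "family \<Rightarrow> 'a::ab_group_add set \<Rightarrow> ('a \<Rightarrow> 'a \<Rightarrow> int) \<Rightarrow> ('a \<Rightarrow> int) \<Rightarrow> bool" where
  "in_family F H lam alpha \<longleftrightarrow> is_qf H lam alpha \<and>
     (case F of
        Fc \<Rightarrow> (\<forall>v\<in>H. even (lam v v + alpha v))
      | Fev \<Rightarrow> (\<forall>v\<in>H. even (lam v v))
      | Fo \<Rightarrow> (\<forall>v\<in>H. even (lam v v)) \<and> (\<forall>v\<in>H. alpha v = 0))"

definition cls :: "'a::ab_group_add set \<Rightarrow> ('a \<Rightarrow> 'a \<Rightarrow> int) \<Rightarrow> ('a \<Rightarrow> int) \<Rightarrow> ('a \<Rightarrow> int) set" where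
  "cls H lam x = {y \<in> dual H. \<exists>v\<in>H. y = x + adj H lam v}"

definition cok_grp :: "'a::ab_group_add set \<Rightarrow> ('a \<Rightarrow> 'a \<Rightarrow> int) \<Rightarrow> ('a \<Rightarrow> int) set monoid" where
  "cok_grp H lam = \<lparr>carrier = cls H lam ` dual H,
                     mult = (\<lambda>A B. {a + b | a b. a \<in> A \<and> b \<in> B}),
                     one = cls H lam 0\<rparr>"

definition linv :: "'a::ab_group_add set \<Rightarrow> ('a \<Rightarrow> 'a \<Rightarrow> int) \<Rightarrow> ('a \<Rightarrow> int) \<Rightarrow> ('a \<Rightarrow> int) \<Rightarrow> rat" where
  "linv H lam x y = (THE q. \<exists>v\<in>H. \<exists>r::int. r \<noteq> 0 \<and> (\<lambda>w. r * x w) = adj H lam v \<and>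
                              q = of_int (y v) / of_int r)"

text \<open>The quadratic linking function q^*(kappa) on Cok lam^, with values in Q/Z
  represented by their fractional part in [0,1).\<close>
definition qval :: "family \<Rightarrow> 'a::ab_group_add set \<Rightarrow> ('a \<Rightarrow> 'a \<Rightarrow> int) \<Rightarrow> ('a \<Rightarrow> int) \<Rightarrow> ('a \<Rightarrow> int) \<Rightarrow> rat" where
  "qval F H lam alpha x = (case F of
       Fc \<Rightarrow> (linv H lam x x + linv H lam x (dual_of H alpha)) / 2
     | _ \<Rightarrow> linv H lam x x / 2)"

definition qlink :: "family \<Rightarrow> 'a::ab_group_add set \<Rightarrow> ('a \<Rightarrow> 'a \<Rightarrow> int) \<Rightarrow> ('a \<Rightarrow> int) \<Rightarrow> ('a \<Rightarrow> int) set \<Rightarrow> rat" where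
  "qlink F H lam alpha c = frac (qval F H lam alpha (SOME x. x \<in> c))"

definition lf_isometry :: "family \<Rightarrow> 'a::ab_group_add set \<Rightarrow> ('a \<Rightarrow> 'a \<Rightarrow> int) \<Rightarrow> ('a \<Rightarrow> int)
     \<Rightarrow> 'a set \<Rightarrow> ('a \<Rightarrow> 'a \<Rightarrow> int) \<Rightarrow> ('a \<Rightarrow> int) \<Rightarrow> (('a \<Rightarrow> int) set \<Rightarrow> ('a \<Rightarrow> int) set) \<Rightarrow> bool" where
  "lf_isometry F H0 lam0 alpha0 H1 lam1 alpha1 theta \<longleftrightarrow>
     theta \<in> iso (cok_grp H0 lam0) (cok_grp H1 lam1) \<and>
     theta (cls H0 lam0 (dual_of H0 alpha0)) = cls H1 lam1 (dual_of H1 alpha1) \<and>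
     (\<forall>c\<in>carrier (cok_grp H0 lam0). qlink F H1 lam1 alpha1 (theta c) = qlink F H0 lam0 alpha0 c)"

text \<open>The glued quadratic function kappa0 \<union>_theta kappa1^- = kappa(H', lam', alpha').
  lam' and alpha' are rational-valued a priori.\<close>
definition glue_carrier :: "'a::ab_group_add set \<Rightarrow> ('a \<Rightarrow> 'a \<Rightarrow> int) \<Rightarrow> 'a set \<Rightarrow> ('a \<Rightarrow> 'a \<Rightarrow> int)
     \<Rightarrow> (('a \<Rightarrow> int) set \<Rightarrow> ('a \<Rightarrow> int) set) \<Rightarrow> (('a \<Rightarrow> int) \<times> ('a \<Rightarrow> int)) set" where
  "glue_carrier H0 lam0 H1 lam1 theta =
     {(x0, x1). x0 \<in> dual H0 \<and> x1 \<in> dual H1 \<and> theta (cls H0 lam0 x0) = cls H1 lam1 x1}"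

definition glue_form :: "'a::ab_group_add set \<Rightarrow> ('a \<Rightarrow> 'a \<Rightarrow> int) \<Rightarrow> 'a set \<Rightarrow> ('a \<Rightarrow> 'a \<Rightarrow> int)
     \<Rightarrow> ('a \<Rightarrow> int) \<times> ('a \<Rightarrow> int) \<Rightarrow> ('a \<Rightarrow> int) \<times> ('a \<Rightarrow> int) \<Rightarrow> rat" where
  "glue_form H0 lam0 H1 lam1 = (\<lambda>(x0, x1) (y0, y1). linv H0 lam0 x0 y0 - linv H1 lam1 x1 y1)"

definition glue_lin :: "'a::ab_group_add set \<Rightarrow> ('a \<Rightarrow> 'a \<Rightarrow> int) \<Rightarrow> ('a \<Rightarrow> int) \<Rightarrow> 'a set \<Rightarrow> ('a \<Rightarrow> 'a \<Rightarrow> int) \<Rightarrow> ('a \<Rightarrow> int)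
     \<Rightarrow> ('a \<Rightarrow> int) \<times> ('a \<Rightarrow> int) \<Rightarrow> rat" where
  "glue_lin H0 lam0 alpha0 H1 lam1 alpha1 =
     glue_form H0 lam0 H1 lam1 (dual_of H0 alpha0, dual_of H1 alpha1)"

definition isometric_to :: "'a::ab_group_add set \<Rightarrow> ('a \<Rightarrow> 'a \<Rightarrow> int) \<Rightarrow> ('a \<Rightarrow> int)
     \<Rightarrow> 'b::ab_group_add set \<Rightarrow> ('b \<Rightarrow> 'b \<Rightarrow> rat) \<Rightarrow> ('b \<Rightarrow> rat) \<Rightarrow> bool" where
  "isometric_to H lam alpha H' lam' alpha' \<longleftrightarrow> (\<exists>phi. bij_betw phi H H' \<and>
     (\<forall>v\<in>H. \<forall>w\<in>H. phi (v + w) = phi v + phi w) \<and>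
     (\<forall>v\<in>H. \<forall>w\<in>H. lam' (phi v) (phi w) = of_int (lam v w)) \<and>
     (\<forall>v\<in>H. alpha' (phi v) = of_int (alpha v)))"

end

theory Submission
  imports Defs "Jordan_Normal_Form.Determinant"
begin

lemma zsc_0[simp]: "zsc 0 v = 0" by (simp add: zsc_def)

lemma zsc_succ: "zsc (k+1) v = zsc k v + v"
proof (cases "k \<ge> 0")
  case True
  then have "nat (k+1) = Suc (nat k)" by simp
  then show ?thesis using True by (simp add: zsc_def add.commute)
next
  case False
  then have k: "nat (-k) = Suc (nat (-(k+1)))" by simp
  show ?thesis
  proof (cases "k = -1")
    case True then show ?thesis by (simp add: zsc_def)
  next
    case False
    with \<open>\<not> k \<ge> 0\<close> have "\<not> k+1 \<ge> 0" by simp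
    then show ?thesis using \<open>\<not> k \<ge> 0\<close> k by (simp add: zsc_def)
  qed
qed

lemma zsc_add_left: "zsc (k+l) v = zsc k v + zsc l v"
proof (induction l rule: int_induct[where k=0])
  case base then show ?case by simp
next
  case (step1 i)
  have "zsc (k + (i+1)) v = zsc (k+i) v + v" using zsc_succ[of "k+i" v] by (simp add: add.assoc)
  then show ?case using step1 zsc_succ[of i v] by (simp add: add.assoc)
next
  case (step2 i)
  have a: "zsc (k + i) v = zsc (k+(i-1)) v + v" using zsc_succ[of "k+(i-1)" v] by simp
  have b: "zsc i v = zsc (i-1) v + v" using zsc_succ[of "i-1" v] by simp
  from step2 a b show ?case by (simp add: algebra_simps)
qed

lemma zsc_1[simp]: "zsc 1 v = v" using zsc_succ[of 0 v] by simp

lemma zsc_uminus_left: "zsc (-k) v = - zsc k v"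
  using zsc_add_left[of k "-k" v] by (simp add: eq_neg_iff_add_eq_0 add.commute)

lemma zsc_diff_left: "zsc (k-l) v = zsc k v - zsc l v"
  using zsc_add_left[of k "-l" v] zsc_uminus_left[of l v] by simp

lemma zsc_add_right: "zsc k (v+w) = zsc k v + zsc k w"
proof (induction k rule: int_induct[where k=0])
  case base then show ?case by simp
next
  case (step1 i) then show ?case using zsc_succ[of i "v+w"] zsc_succ[of i v] zsc_succ[of i w] by (simp add: algebra_simps)
next
  case (step2 i)
  then show ?case using zsc_succ[of "i-1" "v+w"] zsc_succ[of "i-1" v] zsc_succ[of "i-1" w]
    by (simp add: algebra_simps)
qed

lemma zsc_zero_right[simp]: "zsc k (0::'a::ab_group_add) = 0"
  using zsc_add_right[of k "0::'a" 0] by simp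

lemma zsc_uminus_right: "zsc k (-v) = - zsc k v"
  using zsc_add_right[of k v "-v"] by (simp add: add_eq_0_iff)

lemma zsc_diff_right: "zsc k (v-w) = zsc k v - zsc k w"
  using zsc_add_right[of k v "-w"] zsc_uminus_right[of k w] by simp

lemma zsc_mult: "zsc (k*l) v = zsc k (zsc l v)"
proof (induction k rule: int_induct[where k=0])
  case base then show ?case by simp
next
  case (step1 i) then show ?case by (simp add: zsc_succ zsc_add_left algebra_simps)
next
  case (step2 i)
  then show ?case using zsc_succ[of "i-1" "zsc l v"] zsc_add_left[of "(i-1)*l" l v]
    by (simp add: algebra_simps)
qed

lemma zsc_int[simp]: "zsc k (m::int) = k * m"
proof (induction k rule: int_induct[where k=0])
  case base then show ?case by simp
next
  case (step1 i) then show ?case using zsc_succ[of i m] by (simp add: algebra_simps)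
next
  case (step2 i) then show ?case using zsc_succ[of "i-1" m] by (simp add: algebra_simps)
qed

lemma subgrp_zsc: assumes "subgrp S" "v \<in> S" shows "zsc k v \<in> S"
proof (induction k rule: int_induct[where k=0])
  case base then show ?case using assms by (simp add: subgrp_def)
next
  case (step1 i) then show ?case using assms unfolding zsc_succ subgrp_def by blast
next
  case (step2 i)
  have "zsc (i-1) v = zsc i v + - v" using zsc_succ[of "i-1" v] by simp
  moreover have "zsc i v + - v \<in> S" using step2 assms unfolding subgrp_def by blast
  ultimately show ?case by simp
qed

lemma subgrp_diff: "subgrp S \<Longrightarrow> x \<in> S \<Longrightarrow> y \<in> S \<Longrightarrow> x - y \<in> S"
  unfolding subgrp_def diff_conv_add_uminus by blast

lemma subgrp_sum: "subgrp S \<Longrightarrow> (\<And>i. i \<in> A \<Longrightarrow> f i \<in> S) \<Longrightarrow> sum f A \<in> S"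
  unfolding subgrp_def by (induction A rule: infinite_finite_induct) auto

lemma hom_zsc:
  assumes S: "subgrp S" and f: "\<And>x y. x \<in> S \<Longrightarrow> y \<in> S \<Longrightarrow> f (x+y) = f x + f y" and v: "v \<in> S"
  shows "f (zsc k v) = zsc k (f v)"
proof (induction k rule: int_induct[where k=0])
  case base
  have "0 \<in> S" using S by (simp add: subgrp_def)
  then have "f 0 = f 0 + f 0" using f[of 0 0] by simp
  then show ?case by simp
next
  case (step1 i)
  have "zsc i v \<in> S" using subgrp_zsc[OF S v] .
  then have "f (zsc i v + v) = f (zsc i v) + f v" using f v by blast
  then show ?case using step1 by (simp add: zsc_succ)
next
  case (step2 i)
  have "zsc (i-1) v \<in> S" using subgrp_zsc[OF S v] .
  then have h0: "f (zsc (i-1) v + v) = f (zsc (i-1) v) + f v" using f v by blast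
  have "zsc i v = zsc (i-1) v + v" using zsc_succ[of "i-1" v] by simp
  then have h1: "f (zsc i v) = f (zsc (i-1) v) + f v" using h0 by simp
  have h2: "zsc i (f v) = zsc (i-1) (f v) + f v" using zsc_succ[of "i-1" "f v"] by simp
  have "f (zsc (i-1) v) + f v = zsc (i-1) (f v) + f v" using h1 h2 step2 by simp
  then show ?case by simp
qed

lemma hom_sum:
  fixes f :: "'a::ab_group_add \<Rightarrow> 'b::ab_group_add"
  assumes S: "subgrp S" and f: "\<And>x y. x \<in> S \<Longrightarrow> y \<in> S \<Longrightarrow> f (x+y) = f x + f y"
    and g: "\<And>i. i \<in> A \<Longrightarrow> g i \<in> S"
  shows "f (sum g A) = (\<Sum>i\<in>A. f (g i))"
  using g
proof (induction A rule: infinite_finite_induct)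
  case (infinite A)
  have "0 \<in> S" using S by (simp add: subgrp_def)
  then have "f 0 = f 0 + f 0" using f[of 0 0] by simp
  then show ?case using infinite by simp
next
  case empty
  have "0 \<in> S" using S by (simp add: subgrp_def)
  then have "f 0 = f 0 + f 0" using f[of 0 0] by simp
  then show ?case by simp
next
  case (insert x F)
  have s: "sum g F \<in> S" using insert subgrp_sum[OF S, of F g] by simp
  have gx: "g x \<in> S" using insert by simp
  have "f (g x + sum g F) = f (g x) + f (sum g F)" using f[OF gx s] .
  moreover have "f (sum g F) = (\<Sum>i\<in>F. f (g i))" using insert by simp
  ultimately show ?case using insert by simp
qed

lemma subgrp_UNIV[simp]: "subgrp UNIV" by (simp add: subgrp_def)

definition lc :: "(nat \<Rightarrow> 'a::ab_group_add) \<Rightarrow> nat \<Rightarrow> (nat \<Rightarrow> int) \<Rightarrow> 'a" where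
  "lc e n c = (\<Sum>i<n. zsc (c i) (e i))"

definition is_basis :: "(nat \<Rightarrow> 'a::ab_group_add) \<Rightarrow> nat \<Rightarrow> 'a set \<Rightarrow> bool" where
  "is_basis e n S \<longleftrightarrow> (\<forall>v. v \<in> S \<longleftrightarrow> (\<exists>c. v = lc e n c)) \<and> (\<forall>c. lc e n c = 0 \<longrightarrow> (\<forall>i<n. c i = 0))"

lemma lc_add: "lc e n (\<lambda>i. c i + d i) = lc e n c + lc e n d"
  by (simp add: lc_def zsc_add_left sum.distrib)

lemma lc_zsc: "lc e n (\<lambda>i. k * c i) = zsc k (lc e n c)"
proof -
  have "zsc k (lc e n c) = (\<Sum>i<n. zsc k (zsc (c i) (e i)))"
    unfolding lc_def by (rule hom_sum[of UNIV]) (auto simp: zsc_add_right)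
  then show ?thesis by (simp add: lc_def zsc_mult)
qed

lemma lc_neg: "lc e n (\<lambda>i. - c i) = - lc e n c"
  using lc_zsc[of e n "-1" c] by (simp add: zsc_uminus_left)

lemma lc_diff: "lc e n (\<lambda>i. c i - d i) = lc e n c - lc e n d"
  using lc_add[of e n c "\<lambda>i. - d i"] lc_neg[of e n d] by simp

lemma lc_cong: "(\<And>i. i < n \<Longrightarrow> c i = d i) \<Longrightarrow> (\<And>i. i < n \<Longrightarrow> e i = e' i) \<Longrightarrow> lc e n c = lc e' n d"
  unfolding lc_def by (rule sum.cong) auto

lemma lc_Suc: "lc e (Suc n) c = lc e n c + zsc (c n) (e n)"
  by (simp add: lc_def)

lemma lc_0[simp]: "lc e 0 c = 0" by (simp add: lc_def)

lemma lc_zero[simp]: "lc e n (\<lambda>i. 0) = 0" by (simp add: lc_def)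

lemma fg_free_iff: "fg_free S \<longleftrightarrow> (\<exists>e n. is_basis e n S)"
proof
  assume "fg_free S"
  then obtain b where b1: "\<forall>v. v \<in> S \<longleftrightarrow> (\<exists>c. length c = length b \<and> v = lincomb b c)"
    and b2: "\<forall>c c'. length c = length b \<longrightarrow> length c' = length b \<longrightarrow> lincomb b c = lincomb b c' \<longrightarrow> c = c'"
    unfolding fg_free_def by blast
  define n where "n = length b"
  define e where "e = (\<lambda>i. b ! i)"
  have lcl: "lc e n c = lincomb b (map c [0..<n])" for c
    unfolding lc_def lincomb_def n_def e_def by (rule sum.cong) auto
  have lll: "lincomb b c = lc e n (\<lambda>i. c ! i)" for c
    unfolding lc_def lincomb_def n_def e_def by simp
  have "is_basis e n S"
    unfolding is_basis_def
  proof (intro conjI allI impI)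
    fix v show "v \<in> S \<longleftrightarrow> (\<exists>c. v = lc e n c)"
    proof
      assume "v \<in> S" then obtain c where "v = lincomb b c" using b1 by blast
      then show "\<exists>c. v = lc e n c" using lll by blast
    next
      assume "\<exists>c. v = lc e n c" then obtain c where "v = lc e n c" by blast
      then have "v = lincomb b (map c [0..<n])" using lcl by simp
      moreover have "length (map c [0..<n]) = length b" using n_def by simp
      ultimately show "v \<in> S" using b1 by blast
    qed
  next
    fix c i assume "lc e n c = 0" "i < n"
    then have "lincomb b (map c [0..<n]) = lincomb b (map (\<lambda>i. 0) [0..<n])"
      using lcl[of c] lcl[of "\<lambda>i. 0"] by simp
    then have "map c [0..<n] = map (\<lambda>i. 0) [0..<n]" by (intro b2[rule_format]) (simp_all add: n_def)
    then show "c i = 0" using \<open>i < n\<close> by (metis map_eq_conv atLeastLessThan_iff set_upt zero_le)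
  qed
  then show "\<exists>e n. is_basis e n S" by blast
next
  assume "\<exists>e n. is_basis e n S"
  then obtain e n where B: "is_basis e n S" by blast
  define b where "b = map e [0..<n]"
  have lll: "length c = n \<Longrightarrow> lincomb b c = lc e n (\<lambda>i. c ! i)" for c
    unfolding lc_def lincomb_def b_def by simp
  have lcl: "lc e n c = lincomb b (map c [0..<n])" for c
    unfolding lc_def lincomb_def b_def by (rule sum.cong) auto
  show "fg_free S" unfolding fg_free_def
  proof (intro exI conjI allI impI)
    fix v show "v \<in> S \<longleftrightarrow> (\<exists>c. length c = length b \<and> v = lincomb b c)"
    proof
      assume "v \<in> S" then obtain c where "v = lc e n c" using B unfolding is_basis_def by blast
      then have "v = lincomb b (map c [0..<n])" using lcl by simp
      moreover have "length (map c [0..<n]) = length b" using b_def by simp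
      ultimately show "\<exists>c. length c = length b \<and> v = lincomb b c" by blast
    next
      assume "\<exists>c. length c = length b \<and> v = lincomb b c"
      then obtain c where "length c = n" "v = lincomb b c" using b_def by auto
      then have "v = lc e n (\<lambda>i. c ! i)" using lll by simp
      then show "v \<in> S" using B unfolding is_basis_def by blast
    qed
  next
    fix c c' :: "int list" assume l: "length c = length b" "length c' = length b" "lincomb b c = lincomb b c'"
    then have "lc e n (\<lambda>i. c ! i) = lc e n (\<lambda>i. c' ! i)" using lll[of c] lll[of c'] b_def by simp
    then have "lc e n (\<lambda>i. c ! i - c' ! i) = 0" using lc_diff[of e n "\<lambda>i. c ! i" "\<lambda>i. c' ! i"] by simp
    then have "\<forall>i<n. c ! i - c' ! i = 0" using B unfolding is_basis_def by blast
    then show "c = c'" using l b_def by (intro nth_equalityI) auto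
  qed
qed

context
  fixes e :: "nat \<Rightarrow> 'a::ab_group_add" and n :: nat and S :: "'a set"
  assumes B: "is_basis e n S"
begin

lemma basis_span: "v \<in> S \<longleftrightarrow> (\<exists>c. v = lc e n c)" using B unfolding is_basis_def by blast

lemma basis_lc_in[simp]: "lc e n c \<in> S" using basis_span by blast

lemma basis_uniq: "lc e n c = lc e n d \<Longrightarrow> i < n \<Longrightarrow> c i = d i"
proof -
  assume "lc e n c = lc e n d" "i < n"
  then have "lc e n (\<lambda>i. c i - d i) = 0" using lc_diff[of e n c d] by simp
  then have "c i - d i = 0" using B \<open>i < n\<close> unfolding is_basis_def by blast
  then show ?thesis by simp
qed

lemma basis_subgrp: "subgrp S"
  unfolding subgrp_def
proof (intro conjI ballI)
  show "0 \<in> S" using basis_lc_in[of "\<lambda>i. 0"] by simp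
next
  fix x y assume "x \<in> S" "y \<in> S"
  then obtain c d where "x = lc e n c" "y = lc e n d" using basis_span by blast
  then have "x + y = lc e n (\<lambda>i. c i + d i)" using lc_add[of e n c d] by simp
  then show "x + y \<in> S" by simp
next
  fix x assume "x \<in> S"
  then obtain c where "x = lc e n c" using basis_span by blast
  then have "- x = lc e n (\<lambda>i. - c i)" using lc_neg[of e n c] by simp
  then show "- x \<in> S" by simp
qed

lemma basis_elem: "i < n \<Longrightarrow> e i \<in> S"
proof -
  assume i: "i < n"
  have "lc e n (\<lambda>j. if j = i then 1 else 0) = (\<Sum>j<n. if j = i then e j else 0)"
    unfolding lc_def by (rule sum.cong) auto
  also have "\<dots> = e i" using i by simp
  finally have "lc e n (\<lambda>j. if j = i then 1 else 0) = e i" .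
  then show ?thesis using basis_lc_in[of "\<lambda>j. if j = i then 1 else 0"] by simp
qed

definition coord :: "'a \<Rightarrow> nat \<Rightarrow> int" where
  "coord v = (SOME c. v = lc e n c)"

lemma coord_spec: "v \<in> S \<Longrightarrow> lc e n (coord v) = v"
proof -
  assume "v \<in> S"
  then have "\<exists>c. v = lc e n c" using basis_span by blast
  then have "v = lc e n (SOME c. v = lc e n c)" by (rule someI_ex)
  then show ?thesis unfolding coord_def by simp
qed

lemma coord_lc: "i < n \<Longrightarrow> coord (lc e n c) i = c i"
  using coord_spec[OF basis_lc_in[of c]] basis_uniq by blast

lemma coord_add: "v \<in> S \<Longrightarrow> w \<in> S \<Longrightarrow> i < n \<Longrightarrow> coord (v + w) i = coord v i + coord w i"
  using coord_lc[of i "\<lambda>j. coord v j + coord w j"] lc_add[of e n "coord v" "coord w"] coord_spec by simp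

lemma coord_zsc: "v \<in> S \<Longrightarrow> i < n \<Longrightarrow> coord (zsc k v) i = k * coord v i"
  using coord_lc[of i "\<lambda>j. k * coord v j"] lc_zsc[of e n k "coord v"] coord_spec by simp

lemma coord_diff: "v \<in> S \<Longrightarrow> w \<in> S \<Longrightarrow> i < n \<Longrightarrow> coord (v - w) i = coord v i - coord w i"
  using coord_lc[of i "\<lambda>j. coord v j - coord w j"] lc_diff[of e n "coord v" "coord w"] coord_spec by simp

lemma coord_eqI: "v \<in> S \<Longrightarrow> w \<in> S \<Longrightarrow> (\<And>i. i < n \<Longrightarrow> coord v i = coord w i) \<Longrightarrow> v = w"
proof -
  assume a: "v \<in> S" "w \<in> S" "\<And>i. i < n \<Longrightarrow> coord v i = coord w i"
  have "lc e n (coord v) = lc e n (coord w)" by (rule lc_cong) (use a in auto)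
  then show ?thesis using coord_spec a by simp
qed

end

lemma zsc_m1: "zsc (-1) v = - v" by (simp add: zsc_uminus_left)

lemma subgrp_Int: "subgrp A \<Longrightarrow> subgrp B \<Longrightarrow> subgrp (A \<inter> B)"
  unfolding subgrp_def by blast

lemma subgrp_basis:
  assumes "is_basis e n H" "subgrp S" "S \<subseteq> H"
  shows "\<exists>(e'::nat \<Rightarrow> 'a::ab_group_add) m. is_basis e' m S"
  using assms
proof (induction n arbitrary: H S)
  case 0
  have H: "H = {0}" using 0(1) unfolding is_basis_def by auto
  have "0 \<in> S" using 0(2) by (simp add: subgrp_def)
  then have "S = {0}" using 0(3) H by auto
  then have "is_basis e 0 S" unfolding is_basis_def by simp
  then show ?case by blast
next
  case (Suc n)
  note BH = Suc.prems(1)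
  define H' where "H' = {v. \<exists>c. v = lc e n c}"
  have lcS: "lc e (Suc n) (c(n:=0)) = lc e n c" for c
    by (simp add: lc_Suc) (rule lc_cong, auto)
  have B': "is_basis e n H'"
    unfolding is_basis_def
  proof (intro conjI allI impI)
    fix v show "v \<in> H' \<longleftrightarrow> (\<exists>c. v = lc e n c)" unfolding H'_def by simp
  next
    fix c i assume "lc e n c = 0" "i < n"
    then have "lc e (Suc n) (c(n:=0)) = 0" using lcS by simp
    then have "\<forall>j<Suc n. (c(n:=0)) j = 0" using BH unfolding is_basis_def by blast
    then have "(c(n:=0)) i = 0" using \<open>i < n\<close> less_SucI by blast
    then show "c i = 0" using \<open>i < n\<close> by simp
  qed
  define cn where "cn v = coord e (Suc n) v n" for v
  have cn_add: "v \<in> H \<Longrightarrow> w \<in> H \<Longrightarrow> cn (v + w) = cn v + cn w" for v w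
    unfolding cn_def using coord_add[OF BH] by simp
  have cn_diff: "v \<in> H \<Longrightarrow> w \<in> H \<Longrightarrow> cn (v - w) = cn v - cn w" for v w
    unfolding cn_def using coord_diff[OF BH] by simp
  have cn_zsc: "v \<in> H \<Longrightarrow> cn (zsc k v) = k * cn v" for v k
    unfolding cn_def using coord_zsc[OF BH] by simp
  have H'1: "v \<in> H' \<Longrightarrow> v \<in> H \<and> cn v = 0" for v
  proof -
    assume "v \<in> H'" then obtain c where c: "v = lc e n c" unfolding H'_def by blast
    then have "v = lc e (Suc n) (c(n:=0))" using lcS by simp
    then show ?thesis unfolding cn_def using coord_lc[OF BH, of n "c(n:=0)"] basis_lc_in[OF BH] by simp
  qed
  have H'2: "v \<in> H \<Longrightarrow> cn v = 0 \<Longrightarrow> v \<in> H'" for v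
  proof -
    assume "v \<in> H" "cn v = 0"
    then have "v = lc e (Suc n) (coord e (Suc n) v)" using coord_spec[OF BH] by simp
    also have "\<dots> = lc e n (coord e (Suc n) v)" using \<open>cn v = 0\<close> unfolding cn_def by (simp add: lc_Suc)
    finally show "v \<in> H'" unfolding H'_def by blast
  qed
  have SH: "s \<in> S \<Longrightarrow> s \<in> H" for s using Suc.prems(3) by blast
  show ?case
  proof (cases "\<forall>s\<in>S. cn s = 0")
    case True
    then have "S \<subseteq> H'" using H'2 SH by blast
    then show ?thesis using Suc.IH[OF B' Suc.prems(2)] by blast
  next
    case False
    then obtain s where s: "s \<in> S" "cn s \<noteq> 0" by blast
    have "\<exists>s1\<in>S. cn s1 > 0"
    proof (cases "cn s > 0")
      case True then show ?thesis using s by blast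
    next
      case False
      have "zsc (-1) s \<in> S" using subgrp_zsc[OF Suc.prems(2) s(1)] .
      moreover have "cn (zsc (-1) s) > 0" using cn_zsc[OF SH[OF s(1)], of "-1"] False s(2) by simp
      ultimately show ?thesis by blast
    qed
    then obtain s1 where s1: "s1 \<in> S" "cn s1 > 0" by blast
    define P where "P k \<longleftrightarrow> 0 < k \<and> (\<exists>s\<in>S. cn s = int k)" for k :: nat
    have Ps1: "P (nat (cn s1))" unfolding P_def using s1 by auto
    define dn where "dn = (LEAST k. P k)"
    have Pd: "P dn" unfolding dn_def by (rule LeastI[of P, OF Ps1])
    have dmin: "P k \<Longrightarrow> dn \<le> k" for k unfolding dn_def by (rule Least_le[of P])
    define d where "d = int dn"
    have dpos: "d > 0" using Pd unfolding P_def d_def by simp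
    obtain s0 where s0: "s0 \<in> S" "cn s0 = d" using Pd unfolding P_def d_def by blast
    have ddvd: "cn v = (cn v div d) * d" if v: "v \<in> S" for v
    proof -
      define q where "q = cn v div d"
      define r where "r = cn v mod d"
      have "v - zsc q s0 \<in> S" using subgrp_diff[OF Suc.prems(2) v subgrp_zsc[OF Suc.prems(2) s0(1)]] .
      moreover have "cn (v - zsc q s0) = r"
      proof -
        have "zsc q s0 \<in> H" using SH[OF subgrp_zsc[OF Suc.prems(2) s0(1)]] .
        then have "cn (v - zsc q s0) = cn v - q * d" using cn_diff[OF SH[OF v]] cn_zsc[OF SH[OF s0(1)]] s0 by simp
        then show ?thesis unfolding q_def r_def by (simp add: minus_div_mult_eq_mod)
      qed
      moreover have "0 \<le> r" "r < d" unfolding r_def using dpos by simp_all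
      ultimately have "r = 0"
      proof -
        assume a: "v - zsc q s0 \<in> S" "cn (v - zsc q s0) = r" "0 \<le> r" "r < d"
        show "r = 0"
        proof (rule ccontr)
          assume "r \<noteq> 0"
          then have "P (nat r)" unfolding P_def using a by auto
          then have "dn \<le> nat r" by (rule dmin)
          then show False using a(3,4) d_def by linarith
        qed
      qed
      then show ?thesis unfolding q_def r_def by (metis div_mult_mod_eq add_0_right)
    qed
    define S' where "S' = S \<inter> H'"
    have subS': "subgrp S'" unfolding S'_def by (rule subgrp_Int[OF Suc.prems(2) basis_subgrp[OF B']])
    obtain e' m where Be': "is_basis e' m S'" using Suc.IH[OF B' subS'] S'_def by blast
    define e'' where "e'' = e'(m := s0)"
    have lce'': "lc e'' (Suc m) c = lc e' m c + zsc (c m) s0" for c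
    proof -
      have "lc e'' m c = lc e' m c" by (rule lc_cong) (auto simp: e''_def)
      then show ?thesis by (simp add: lc_Suc e''_def)
    qed
    have "is_basis e'' (Suc m) S"
      unfolding is_basis_def
    proof (intro conjI allI impI)
      fix v show "v \<in> S \<longleftrightarrow> (\<exists>c. v = lc e'' (Suc m) c)"
      proof
        assume v: "v \<in> S"
        define q where "q = cn v div d"
        have v'S: "v - zsc q s0 \<in> S" using subgrp_diff[OF Suc.prems(2) v subgrp_zsc[OF Suc.prems(2) s0(1)]] .
        have "zsc q s0 \<in> H" using SH[OF subgrp_zsc[OF Suc.prems(2) s0(1)]] .
        then have "cn (v - zsc q s0) = cn v - q * d" using cn_diff[OF SH[OF v]] cn_zsc[OF SH[OF s0(1)]] s0 by simp
        also have "\<dots> = 0" unfolding q_def using ddvd[OF v] by simp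
        finally have "v - zsc q s0 \<in> H'" using H'2 SH[OF v'S] by simp
        then have "v - zsc q s0 \<in> S'" using v'S S'_def by simp
        then obtain c' where c': "v - zsc q s0 = lc e' m c'" using basis_span[OF Be'] by blast
        have "lc e'' (Suc m) (c'(m := q)) = lc e' m (c'(m := q)) + zsc q s0" using lce'' by simp
        also have "lc e' m (c'(m := q)) = lc e' m c'" by (rule lc_cong) auto
        finally have "lc e'' (Suc m) (c'(m := q)) = lc e' m c' + zsc q s0" .
        also have "\<dots> = v" using c' by (simp add: algebra_simps)
        finally have "lc e'' (Suc m) (c'(m := q)) = v" .
        then show "\<exists>c. v = lc e'' (Suc m) c" by metis
      next
        assume "\<exists>c. v = lc e'' (Suc m) c"
        then obtain c where c: "v = lc e'' (Suc m) c" by blast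
        have "lc e' m c \<in> S" using basis_lc_in[OF Be'] S'_def by blast
        moreover have "zsc (c m) s0 \<in> S" using subgrp_zsc[OF Suc.prems(2) s0(1)] .
        ultimately show "v \<in> S" using c lce'' Suc.prems(2) unfolding subgrp_def by simp
      qed
    next
      fix c i assume c0: "lc e'' (Suc m) c = 0" and i: "i < Suc m"
      have wS': "lc e' m c \<in> S'" using basis_lc_in[OF Be'] .
      then have wH: "lc e' m c \<in> H" "cn (lc e' m c) = 0" using H'1 S'_def by auto
      have zH: "zsc (c m) s0 \<in> H" using SH[OF subgrp_zsc[OF Suc.prems(2) s0(1)]] .
      have "cn (lc e' m c + zsc (c m) s0) = 0" using c0 lce'' H'1 basis_subgrp[OF B'] 
        by (metis cn_add subgrp_def wH zH)
      then have "c m * d = 0" using cn_add[OF wH(1) zH] wH(2) cn_zsc[OF SH[OF s0(1)]] s0(2) by simp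
      then have cm: "c m = 0" using dpos by simp
      then have "lc e' m c = 0" using c0 lce'' by simp
      then have "\<forall>j<m. c j = 0" using Be' unfolding is_basis_def by blast
      then show "c i = 0" using cm i less_Suc_eq by auto
    qed
    then show ?thesis by blast
  qed
qed

lemma fg_free_subgrp: "fg_free H \<Longrightarrow> subgrp S \<Longrightarrow> S \<subseteq> H \<Longrightarrow> fg_free S"
  using subgrp_basis fg_free_iff by metis

lemma hom_lc_int:
  assumes B: "is_basis e m S" and f: "\<And>x y. x \<in> S \<Longrightarrow> y \<in> S \<Longrightarrow> f (x+y) = (f x + f y :: int)"
  shows "f (lc e m c) = (\<Sum>i<m. c i * f (e i))"
proof -
  have "f (lc e m c) = (\<Sum>i<m. f (zsc (c i) (e i)))"
    unfolding lc_def by (rule hom_sum[OF basis_subgrp[OF B] f]) (auto intro: subgrp_zsc[OF basis_subgrp[OF B]] basis_elem[OF B])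
  also have "\<dots> = (\<Sum>i<m. c i * f (e i))"
    by (rule sum.cong) (auto simp: hom_zsc[OF basis_subgrp[OF B] f basis_elem[OF B]])
  finally show ?thesis .
qed

lemma dual_lc: "is_basis e m S \<Longrightarrow> x \<in> dual S \<Longrightarrow> x (lc e m c) = (\<Sum>i<m. c i * x (e i))"
  by (rule hom_lc_int) (auto simp: dual_def)

lemma adj_in_dual:
  assumes sym: "\<forall>v\<in>S. \<forall>w\<in>S. lam v w = lam w v" and add: "\<forall>u\<in>S. \<forall>v\<in>S. \<forall>w\<in>S. lam (u+v) w = lam u w + lam v w"
    and v: "v \<in> S" and S: "subgrp S"
  shows "adj S lam v \<in> dual S"
  unfolding dual_def adj_def dual_of_def
proof (intro CollectI conjI ballI allI impI)
  fix x y assume "x \<in> S" "y \<in> S"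
  then have "x + y \<in> S" using S unfolding subgrp_def by blast
  then have "lam v (x+y) = lam (x+y) v" using sym v by blast
  also have "\<dots> = lam x v + lam y v" using add \<open>x \<in> S\<close> \<open>y \<in> S\<close> v by blast
  also have "\<dots> = lam v x + lam v y" using sym \<open>x \<in> S\<close> \<open>y \<in> S\<close> v by simp
  finally show "(if x + y \<in> S then lam v (x + y) else 0) = (if x \<in> S then lam v x else 0) + (if y \<in> S then lam v y else 0)"
    using \<open>x \<in> S\<close> \<open>y \<in> S\<close> \<open>x + y \<in> S\<close> by simp
qed simp

lemma nondeg_fi:
  fixes lam :: "'a::ab_group_add \<Rightarrow> 'a \<Rightarrow> int"
  assumes B: "is_basis e m S"
    and sym: "\<forall>v\<in>S. \<forall>w\<in>S. lam v w = lam w v" and add: "\<forall>u\<in>S. \<forall>v\<in>S. \<forall>w\<in>S. lam (u+v) w = lam u w + lam v w"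
    and nd: "nondeg S lam" and x: "x \<in> dual S"
  shows "\<exists>r v. r \<noteq> 0 \<and> v \<in> S \<and> (\<lambda>w. r * x w) = adj S lam v"
proof -
  have S: "subgrp S" using basis_subgrp[OF B] .
  have eS: "i < m \<Longrightarrow> e i \<in> S" for i using basis_elem[OF B] .
  define G where "G = mat m m (\<lambda>(i,j). lam (e i) (e j))"
  have G: "G \<in> carrier_mat m m" unfolding G_def by simp
  have lam_lc: "lam (lc e m c) w = (\<Sum>i<m. c i * lam (e i) w)" if w: "w \<in> S" for c w
    by (rule hom_lc_int[OF B]) (use add w in blast)
  have lam_lc2: "lam v (lc e m c) = (\<Sum>i<m. c i * lam v (e i))" if v: "v \<in> S" for c v
  proof -
    have "adj S lam v \<in> dual S" by (rule adj_in_dual[OF sym add v S])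
    from dual_lc[OF B this, of c] show ?thesis unfolding adj_def dual_of_def
      using eS basis_lc_in[OF B] by simp
  qed
  have Gv: "(G *\<^sub>v c) $ j = (\<Sum>i<m. c $ i * lam (e i) (e j))" if "j < m" "c \<in> carrier_vec m" for c j
  proof -
    have "(G *\<^sub>v c) $ j = (\<Sum>i\<in>{0..<m}. lam (e j) (e i) * c $ i)"
      using that G unfolding G_def by (simp add: scalar_prod_def)
    also have "\<dots> = (\<Sum>i<m. c $ i * lam (e i) (e j))"
      by (rule sum.cong) (use sym eS that in \<open>auto simp: atLeast0LessThan\<close>)
    finally show ?thesis .
  qed
  have inj: "c = 0\<^sub>v m" if c: "c \<in> carrier_vec m" "G *\<^sub>v c = 0\<^sub>v m" for c
  proof -
    define u where "u = lc e m (\<lambda>i. c $ i)"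
    have uS: "u \<in> S" unfolding u_def using basis_lc_in[OF B] .
    have ue: "lam u (e j) = 0" if j: "j < m" for j
    proof -
      have "lam u (e j) = (\<Sum>i<m. c $ i * lam (e i) (e j))" unfolding u_def using lam_lc eS j by simp
      also have "\<dots> = (G *\<^sub>v c) $ j" by (rule Gv[OF j c(1), symmetric])
      also have "\<dots> = 0" using c j by simp
      finally show ?thesis .
    qed
    have "adj S lam u = 0"
    proof
      fix w show "adj S lam u w = 0 w"
      proof (cases "w \<in> S")
        case True
        then obtain cw where "w = lc e m cw" using basis_span[OF B] by blast
        then have "lam u w = (\<Sum>i<m. cw i * lam u (e i))" using lam_lc2 uS by simp
        also have "\<dots> = 0" using ue by simp
        finally show ?thesis unfolding adj_def dual_of_def using True by simp
      qed (simp add: adj_def dual_of_def)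
    qed
    then have "u = 0" using nd uS unfolding nondeg_def by blast
    then have "lc e m (\<lambda>i. c $ i) = lc e m (\<lambda>i. 0)" unfolding u_def by simp
    then have "\<And>i. i < m \<Longrightarrow> c $ i = 0" using basis_uniq[OF B] by blast
    then show ?thesis using c by (intro eq_vecI) auto
  qed
  have detG: "det G \<noteq> 0"
    using det_0_iff_vec_prod_zero[OF G] inj by blast
  define y where "y = vec m (\<lambda>j. x (e j))"
  have y: "y \<in> carrier_vec m" unfolding y_def by simp
  define cv where "cv = adj_mat G *\<^sub>v y"
  have cv: "cv \<in> carrier_vec m" unfolding cv_def using adj_mat(1)[OF G] y by simp
  have Gcv: "G *\<^sub>v cv = det G \<cdot>\<^sub>v y"
  proof -
    have "G *\<^sub>v cv = (G * adj_mat G) *\<^sub>v y" unfolding cv_def using adj_mat(1)[OF G] G y by simp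
    also have "\<dots> = (det G \<cdot>\<^sub>m 1\<^sub>m m) *\<^sub>v y" using adj_mat(2)[OF G] by simp
    also have "\<dots> = det G \<cdot>\<^sub>v y"
    proof (intro eq_vecI)
      fix i assume i: "i < dim_vec (det G \<cdot>\<^sub>v y)"
      have "(\<Sum>ia = 0..<m. det G * (if ia = i then 1 else 0) * y $ ia) = (\<Sum>ia = 0..<m. if ia = i then det G * y $ ia else 0)"
        by (rule sum.cong) auto
      then show "((det G \<cdot>\<^sub>m 1\<^sub>m m) *\<^sub>v y) $ i = (det G \<cdot>\<^sub>v y) $ i" using i y by (simp add: scalar_prod_def)
    qed (use y in simp)
    finally show ?thesis .
  qed
  define v0 where "v0 = lc e m (\<lambda>i. cv $ i)"
  have v0S: "v0 \<in> S" unfolding v0_def using basis_lc_in[OF B] .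
  have v0e: "lam v0 (e j) = det G * x (e j)" if j: "j < m" for j
  proof -
    have "lam v0 (e j) = (\<Sum>i<m. cv $ i * lam (e i) (e j))" unfolding v0_def using lam_lc eS j by simp
    also have "\<dots> = (G *\<^sub>v cv) $ j" by (rule Gv[OF j cv, symmetric])
    also have "\<dots> = det G * x (e j)" using Gcv j y unfolding y_def by simp
    finally show ?thesis .
  qed
  have "(\<lambda>w. det G * x w) = adj S lam v0"
  proof
    fix w show "det G * x w = adj S lam v0 w"
    proof (cases "w \<in> S")
      case True
      then obtain cw where w: "w = lc e m cw" using basis_span[OF B] by blast
      have "lam v0 w = (\<Sum>i<m. cw i * lam v0 (e i))" using lam_lc2 v0S w by simp
      also have "\<dots> = (\<Sum>i<m. cw i * (det G * x (e i)))" using v0e by simp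
      also have "\<dots> = det G * (\<Sum>i<m. cw i * x (e i))" by (simp add: sum_distrib_left algebra_simps)
      also have "\<dots> = det G * x w" using dual_lc[OF B x] w by simp
      finally show ?thesis unfolding adj_def dual_of_def using True by simp
    next
      case False
      then show ?thesis using x unfolding adj_def dual_of_def dual_def by simp
    qed
  qed
  then show ?thesis using detG v0S by blast
qed

lemma dual_add: "x \<in> dual S \<Longrightarrow> y \<in> dual S \<Longrightarrow> x + y \<in> dual S"
  unfolding dual_def by auto

lemma dual_uminus: "x \<in> dual S \<Longrightarrow> - x \<in> dual S"
  unfolding dual_def by auto

lemma dual_zero: "0 \<in> dual S" unfolding dual_def by auto

lemma torsion_free:
  assumes B: "is_basis e n H" and v: "v \<in> H" and r: "r \<noteq> 0" and z: "zsc r v = 0"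
  shows "v = 0"
proof -
  have "0 = lc e n (\<lambda>i. 0)" by simp
  then have c0: "i < n \<Longrightarrow> coord e n 0 i = 0" for i using coord_lc[OF B, of i "\<lambda>i. 0"] by simp
  have "coord e n v i = coord e n 0 i" if i: "i < n" for i
  proof -
    have "r * coord e n v i = coord e n (zsc r v) i" using coord_zsc[OF B v i] by simp
    also have "\<dots> = 0" using z c0 i by simp
    finally show ?thesis using r c0 i by simp
  qed
  then show ?thesis using coord_eqI[OF B v] basis_subgrp[OF B] unfolding subgrp_def by blast
qed

locale fs =
  fixes S :: "'a::ab_group_add set" and lm :: "'a \<Rightarrow> 'a \<Rightarrow> int"
  assumes S: "subgrp S"
    and sym: "\<forall>v\<in>S. \<forall>w\<in>S. lm v w = lm w v"
    and add: "\<forall>u\<in>S. \<forall>v\<in>S. \<forall>w\<in>S. lm (u+v) w = lm u w + lm v w"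
begin

lemma S0: "0 \<in> S" using S unfolding subgrp_def by blast
lemma Sadd: "u \<in> S \<Longrightarrow> v \<in> S \<Longrightarrow> u + v \<in> S" using S unfolding subgrp_def by blast
lemma Sneg: "u \<in> S \<Longrightarrow> - u \<in> S" using S unfolding subgrp_def by blast
lemma Sdiff: "u \<in> S \<Longrightarrow> v \<in> S \<Longrightarrow> u - v \<in> S" using subgrp_diff[OF S] .

lemma adj_dual: "v \<in> S \<Longrightarrow> adj S lm v \<in> dual S"
  by (rule adj_in_dual[OF sym add _ S])

lemma lm_zsc: "v \<in> S \<Longrightarrow> w \<in> S \<Longrightarrow> lm (zsc k v) w = k * lm v w"
  using hom_zsc[OF S, of "\<lambda>u. lm u w" v k] add by simp

lemma lm_neg: "v \<in> S \<Longrightarrow> w \<in> S \<Longrightarrow> lm (- v) w = - lm v w"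
  using lm_zsc[of v w "-1"] by (simp add: zsc_m1)

lemma adj_add: "u \<in> S \<Longrightarrow> v \<in> S \<Longrightarrow> adj S lm (u+v) = adj S lm u + adj S lm v"
  unfolding adj_def dual_of_def using add by (auto simp: fun_eq_iff)

lemma adj_zsc: "v \<in> S \<Longrightarrow> adj S lm (zsc k v) = (\<lambda>w. k * adj S lm v w)"
  unfolding adj_def dual_of_def using lm_zsc by (auto simp: fun_eq_iff)

lemma adj_0: "adj S lm 0 = 0"
  using adj_zsc[OF S0, of 0] by (simp add: fun_eq_iff)

lemma adj_uminus: "u \<in> S \<Longrightarrow> adj S lm (- u) = - adj S lm u"
  unfolding adj_def dual_of_def using lm_neg by (auto simp: fun_eq_iff)

lemma cls_mem: "x \<in> dual S \<Longrightarrow> y \<in> cls S lm x \<longleftrightarrow> (\<exists>u\<in>S. y = x + adj S lm u)"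
  unfolding cls_def using dual_add adj_dual by blast

lemma cls_self: "x \<in> dual S \<Longrightarrow> x \<in> cls S lm x"
  using cls_mem[of x x] S0 adj_0 by force

lemma cls_eq: assumes x: "x \<in> dual S" and y: "y \<in> dual S"
  shows "cls S lm x = cls S lm y \<longleftrightarrow> (\<exists>u\<in>S. x = y + adj S lm u)"
proof
  assume "cls S lm x = cls S lm y"
  then have "x \<in> cls S lm y" using cls_self[OF x] by simp
  then show "\<exists>u\<in>S. x = y + adj S lm u" using cls_mem[OF y] by blast
next
  assume "\<exists>u\<in>S. x = y + adj S lm u"
  then obtain u where u: "u \<in> S" "x = y + adj S lm u" by blast
  show "cls S lm x = cls S lm y"
  proof (rule Set.set_eqI)
    fix z
    show "z \<in> cls S lm x \<longleftrightarrow> z \<in> cls S lm y"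
    proof
      assume "z \<in> cls S lm x"
      then obtain u' where u': "u' \<in> S" "z = x + adj S lm u'" using cls_mem[OF x] by blast
      then have "z = y + adj S lm (u + u')" using u adj_add by (simp add: add.assoc)
      then show "z \<in> cls S lm y" using cls_mem[OF y] Sadd u u' by blast
    next
      assume "z \<in> cls S lm y"
      then obtain u' where u': "u' \<in> S" "z = y + adj S lm u'" using cls_mem[OF y] by blast
      then have "z = x + adj S lm (u' + - u)" using u adj_add[OF u'(1) Sneg[OF u(1)]] adj_uminus[OF u(1)]
        by (simp add: algebra_simps)
      then show "z \<in> cls S lm x" using cls_mem[OF x] Sadd Sneg u u' by blast
    qed
  qed
qed

lemma cls_of_mem: assumes x: "x \<in> dual S" and y: "y \<in> cls S lm x" shows "cls S lm y = cls S lm x"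
proof -
  have yd: "y \<in> dual S" using y unfolding cls_def by blast
  obtain u where "u \<in> S" "y = x + adj S lm u" using y cls_mem[OF x] by blast
  then show ?thesis using cls_eq[OF yd x] by blast
qed

lemma cls_mult: assumes x: "x \<in> dual S" and y: "y \<in> dual S"
  shows "{a + b |a b. a \<in> cls S lm x \<and> b \<in> cls S lm y} = cls S lm (x + y)"
proof (rule Set.set_eqI)
  fix z
  show "z \<in> {a + b |a b. a \<in> cls S lm x \<and> b \<in> cls S lm y} \<longleftrightarrow> z \<in> cls S lm (x + y)"
  proof
    assume "z \<in> {a + b |a b. a \<in> cls S lm x \<and> b \<in> cls S lm y}"
    then obtain a b where "z = a + b" "a \<in> cls S lm x" "b \<in> cls S lm y" by blast
    then obtain u u' where "u \<in> S" "u' \<in> S" "a = x + adj S lm u" "b = y + adj S lm u'"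
      using cls_mem x y by blast
    then have "z = (x + y) + adj S lm (u + u')" "u + u' \<in> S" using \<open>z = a + b\<close> adj_add Sadd
      by (simp_all add: algebra_simps)
    then show "z \<in> cls S lm (x + y)" using cls_mem[OF dual_add[OF x y]] by blast
  next
    assume "z \<in> cls S lm (x + y)"
    then obtain u where "u \<in> S" "z = (x + y) + adj S lm u" using cls_mem[OF dual_add[OF x y]] by blast
    moreover have "x + adj S lm u \<in> cls S lm x" using cls_mem[OF x] \<open>u \<in> S\<close> by blast
    moreover have "y \<in> cls S lm y" using cls_self[OF y] .
    moreover have "z = (x + adj S lm u) + y" using calculation(2) by (simp add: algebra_simps)
    ultimately show "z \<in> {a + b |a b. a \<in> cls S lm x \<and> b \<in> cls S lm y}"
      by blast
  qed
qed

lemma linv_eq: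
  assumes nd: "nondeg S lm" and r: "r \<noteq> 0" and v: "v \<in> S" and xv: "(\<lambda>w. r * x w) = adj S lm v"
    and y: "y \<in> dual S"
  shows "linv S lm x y = of_int (y v) / of_int r"
  unfolding linv_def
proof (rule the_equality)
  show "\<exists>v'\<in>S. \<exists>r'. r' \<noteq> 0 \<and> (\<lambda>w. r' * x w) = adj S lm v' \<and> of_int (y v) / of_int r = of_int (y v') / of_int r'"
    using r v xv by blast
next
  fix q :: rat assume "\<exists>v'\<in>S. \<exists>r'. r' \<noteq> 0 \<and> (\<lambda>w. r' * x w) = adj S lm v' \<and> q = of_int (y v') / of_int r'"
  then obtain v' r' where v': "v' \<in> S" "r' \<noteq> 0" "(\<lambda>w. r' * x w) = adj S lm v'" "q = of_int (y v') / of_int r'"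
    by blast
  have "adj S lm (zsc r v') = adj S lm (zsc r' v)"
  proof
    fix w
    have "adj S lm (zsc r v') w = r * (r' * x w)" using adj_zsc[OF v'(1), of r] v'(3) by (simp add: fun_eq_iff)
    also have "\<dots> = r' * (r * x w)" by simp
    also have "\<dots> = adj S lm (zsc r' v) w" using adj_zsc[OF v, of r'] xv by (simp add: fun_eq_iff)
    finally show "adj S lm (zsc r v') w = adj S lm (zsc r' v) w" .
  qed
  then have "adj S lm (zsc r v' - zsc r' v) = 0"
    using adj_add[OF subgrp_zsc[OF S v'(1)] Sneg[OF subgrp_zsc[OF S v]]] adj_uminus[OF subgrp_zsc[OF S v]]
    by simp
  moreover have "zsc r v' - zsc r' v \<in> S" using Sdiff subgrp_zsc[OF S] v v'(1) by blast
  ultimately have "zsc r v' - zsc r' v = 0" using nd unfolding nondeg_def by blast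
  then have eq: "zsc r v' = zsc r' v" by simp
  have yadd: "\<And>a b. a \<in> S \<Longrightarrow> b \<in> S \<Longrightarrow> y (a + b) = y a + y b" using y unfolding dual_def by blast
  have "r * y v' = r' * y v" using hom_zsc[OF S yadd v'(1), of r] hom_zsc[OF S yadd v, of r'] eq by simp
  then have "of_int r * of_int (y v') = (of_int r' * of_int (y v) :: rat)" by (metis of_int_mult)
  then show "q = of_int (y v) / of_int r" using v'(4) r v'(2) by (simp add: frac_eq_eq algebra_simps)
qed

end

lemma fs_neg: "fs S lm \<Longrightarrow> fs S (neg_form lm)"
  unfolding fs_def neg_form_def by simp

lemma (in fs) adj_neg_form: "u \<in> S \<Longrightarrow> adj S (neg_form lm) u = adj S lm (- u)"
  unfolding adj_def dual_of_def neg_form_def using lm_neg by (auto simp: fun_eq_iff)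

lemma (in fs) cls_neg_form: "x \<in> dual S \<Longrightarrow> cls S (neg_form lm) x = cls S lm x"
proof -
  assume x: "x \<in> dual S"
  interpret n: fs S "neg_form lm" using fs_neg fs_axioms by blast
  show ?thesis
  proof (rule Set.set_eqI)
    fix z show "z \<in> cls S (neg_form lm) x \<longleftrightarrow> z \<in> cls S lm x"
      unfolding n.cls_mem[OF x] cls_mem[OF x]
    proof
      assume "\<exists>u\<in>S. z = x + adj S (neg_form lm) u"
      then obtain u where "u \<in> S" "z = x + adj S (neg_form lm) u" by blast
      then have "z = x + adj S lm (- u)" "- u \<in> S" using adj_neg_form Sneg by auto
      then show "\<exists>u\<in>S. z = x + adj S lm u" by blast
    next
      assume "\<exists>u\<in>S. z = x + adj S lm u"
      then obtain u where u: "u \<in> S" "z = x + adj S lm u" by blast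
      then have "adj S (neg_form lm) (- u) = adj S lm u" using adj_neg_form[OF Sneg[OF u(1)]] by simp
      then have "z = x + adj S (neg_form lm) (- u)" "- u \<in> S" using u Sneg by auto
      then show "\<exists>u\<in>S. z = x + adj S (neg_form lm) u" by blast
    qed
  qed
qed

lemma surj_dual:
  assumes ds: "direct_summand S H" and ns: "nonsing H lam" and x: "x \<in> dual S" and H: "subgrp H"
  shows "\<exists>v\<in>H. dual_of S (lam v) = x"
proof -
  obtain K where K: "subgrp K" "K \<subseteq> H" "S \<inter> K = {0}" "\<forall>v\<in>H. \<exists>a\<in>S. \<exists>b\<in>K. v = a + b"
    using ds unfolding direct_summand_def by blast
  have SS: "subgrp S" "S \<subseteq> H" using ds unfolding direct_summand_def by auto
  have uniq: "a = a'" if "a \<in> S" "a' \<in> S" "b \<in> K" "b' \<in> K" "a + b = a' + b'" for a a' b b'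
  proof -
    have "a - a' = b' - b" using that(5) by (simp add: algebra_simps)
    moreover have "a - a' \<in> S" using subgrp_diff[OF SS(1) that(1) that(2)] .
    moreover have "b' - b \<in> K" using subgrp_diff[OF K(1) that(4) that(3)] .
    ultimately have "a - a' \<in> S \<inter> K" by simp
    then have "a - a' = 0" using K(3) by blast
    then show ?thesis by simp
  qed
  define p where "p w = (THE a. a \<in> S \<and> (\<exists>b\<in>K. w = a + b))" for w
  have p: "p w \<in> S \<and> (\<exists>b\<in>K. w = p w + b)" if "w \<in> H" for w
  proof -
    have "\<exists>a\<in>S. \<exists>b\<in>K. w = a + b" using K(4) that by (rule bspec)
    then obtain a b where ab: "a \<in> S" "b \<in> K" "w = a + b" by blast
    have "p w = a" unfolding p_def
    proof (rule the_equality)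
      show "a \<in> S \<and> (\<exists>b\<in>K. w = a + b)" using ab by blast
    next
      fix a' assume "a' \<in> S \<and> (\<exists>b\<in>K. w = a' + b)"
      then obtain b' where "a' \<in> S" "b' \<in> K" "w = a' + b'" by blast
      then have "a' + b' = a + b" using ab(3) by metis
      then show "a' = a" using uniq[of a' a b' b] ab(1,2) \<open>a' \<in> S\<close> \<open>b' \<in> K\<close> by blast
    qed
    then show ?thesis unfolding \<open>p w = a\<close> using ab by blast
  qed
  have pS: "w \<in> S \<Longrightarrow> p w = w" for w
  proof -
    assume w: "w \<in> S"
    then have "w \<in> H" using SS by blast
    then obtain b where "p w \<in> S" "b \<in> K" "w = p w + b" using p by blast
    moreover have "0 \<in> K" using K(1) unfolding subgrp_def by blast
    moreover have "w + 0 = p w + b" unfolding add_0_right by (rule calculation(3))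
    ultimately have "w = p w" using uniq[of w "p w" 0 b] w by blast
    then show "p w = w" by (rule sym)
  qed
  have padd: "p (v + w) = p v + p w" if vH: "v \<in> H" and wH: "w \<in> H" for v w
  proof -
    obtain b where b: "b \<in> K" "v = p v + b" using p[OF vH] by blast
    obtain b' where b': "b' \<in> K" "w = p w + b'" using p[OF wH] by blast
    have vw: "v + w \<in> H" using H vH wH unfolding subgrp_def by blast
    obtain b'' where b'': "b'' \<in> K" "v + w = p (v + w) + b''" using p[OF vw] by blast
    have "p v \<in> S" "p w \<in> S" using p vH wH by blast+
    then have "p v + p w \<in> S" using SS(1) unfolding subgrp_def by blast
    moreover have "b + b' \<in> K" using K(1) b(1) b'(1) unfolding subgrp_def by blast
    moreover have "p (v + w) + b'' = (p v + p w) + (b + b')"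
    proof -
      have "p (v+w) + b'' = v + w" using b''(2)[symmetric] .
      also have "v + w = (p v + b) + (p w + b')" using b(2) b'(2) by (rule arg_cong2[where f="(+)"])
      also have "\<dots> = (p v + p w) + (b + b')" by (simp add: algebra_simps)
      finally show ?thesis .
    qed
    moreover have "p (v + w) \<in> S" using p[OF vw] by blast
    ultimately show ?thesis using uniq[of "p (v+w)" "p v + p w" b'' "b + b'"] b''(1) by blast
  qed
  define x' where "x' = dual_of H (\<lambda>w. x (p w))"
  have x'd: "x' \<in> dual H"
    unfolding dual_def x'_def dual_of_def
  proof (intro CollectI conjI ballI allI impI)
    fix a b assume ab: "a \<in> H" "b \<in> H"
    have "a + b \<in> H" using H ab unfolding subgrp_def by blast
    have pa: "p a \<in> S" "p b \<in> S" using p ab by blast+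
    have xadd: "\<forall>s\<in>S. \<forall>t\<in>S. x (s + t) = x s + x t" using x unfolding dual_def by blast
    have "x (p (a+b)) = x (p a + p b)" using padd ab by simp
    also have "\<dots> = x (p a) + x (p b)" using xadd pa by blast
    finally show "(if a + b \<in> H then x (p (a + b)) else 0) = (if a \<in> H then x (p a) else 0) + (if b \<in> H then x (p b) else 0)"
      using ab \<open>a + b \<in> H\<close> by simp
  qed simp
  obtain v where v: "v \<in> H" "adj H lam v = x'" using ns x'd unfolding nonsing_def by blast
  have "dual_of S (lam v) = x"
  proof
    fix w show "dual_of S (lam v) w = x w"
    proof (cases "w \<in> S")
      case True
      then have "w \<in> H" using SS by blast
      have "adj H lam v w = x' w" using v by simp
      then have "lam v w = x' w" using \<open>w \<in> H\<close> unfolding adj_def dual_of_def by simp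
      also have "\<dots> = x w" unfolding x'_def dual_of_def using \<open>w \<in> H\<close> pS[OF True] by simp
      finally show ?thesis unfolding dual_of_def using True by simp
    next
      case False then show ?thesis using x unfolding dual_of_def dual_def by simp
    qed
  qed
  then show ?thesis using v by blast
qed

lemma dual_zsc: "y \<in> dual S \<Longrightarrow> subgrp S \<Longrightarrow> v \<in> S \<Longrightarrow> y (zsc k v) = k * y v"
  using hom_zsc[of S y v k] unfolding dual_def by simp

lemma dual_neg: "y \<in> dual S \<Longrightarrow> subgrp S \<Longrightarrow> v \<in> S \<Longrightarrow> y (- v) = - y v"
  using dual_zsc[of y S v "-1"] by (simp add: zsc_m1)

locale main =
  fixes F :: family and H H0 :: "'v::ab_group_add set" and lam :: "'v \<Rightarrow> 'v \<Rightarrow> int"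
    and alpha :: "'v \<Rightarrow> int" and H1 :: "'v set"
  assumes fam: "in_family F H lam alpha" and ns: "nonsing H lam" and ds: "direct_summand H0 H"
    and nd0: "nondeg H0 lam" and H1_def: "H1 = {v \<in> H. \<forall>v0\<in>H0. lam v v0 = 0}"
begin

lemma qf: "is_qf H lam alpha" using fam unfolding in_family_def by blast
lemma fgH: "fg_free H" using qf unfolding is_qf_def by blast
lemma sym: "\<forall>v\<in>H. \<forall>w\<in>H. lam v w = lam w v" using qf unfolding is_qf_def by blast
lemma addl: "\<forall>u\<in>H. \<forall>v\<in>H. \<forall>w\<in>H. lam (u + v) w = lam u w + lam v w" using qf unfolding is_qf_def by blast
lemma alpha_add: "\<forall>v\<in>H. \<forall>w\<in>H. alpha (v + w) = alpha v + alpha w" using qf unfolding is_qf_def by blast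

lemma basisH: "\<exists>e n. is_basis e n H" using fgH fg_free_iff by blast
lemma subH: "subgrp H" using basisH basis_subgrp by blast

interpretation fH: fs H lam by unfold_locales (use subH sym addl in auto)

lemma H0sub: "subgrp H0" "H0 \<subseteq> H" using ds unfolding direct_summand_def by auto

lemma H1sub: "subgrp H1" "H1 \<subseteq> H"
proof -
  show "H1 \<subseteq> H" unfolding H1_def by blast
  show "subgrp H1" unfolding subgrp_def
  proof (intro conjI ballI)
    have "lam 0 v0 = 0" if "v0 \<in> H0" for v0 using fH.lm_zsc[OF fH.S0, of v0 0] that H0sub by auto
    then show "0 \<in> H1" unfolding H1_def using fH.S0 by blast
  next
    fix x y assume "x \<in> H1" "y \<in> H1"
    then show "x + y \<in> H1" unfolding H1_def using fH.Sadd addl H0sub(2) by auto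
  next
    fix x assume "x \<in> H1"
    then show "- x \<in> H1" unfolding H1_def using fH.Sneg fH.lm_neg H0sub(2) by auto
  qed
qed

interpretation f0: fs H0 lam by unfold_locales (use H0sub sym addl in blast)+
interpretation f1: fs H1 lam by unfold_locales (use H1sub sym addl in blast)+
interpretation f1n: fs H1 "neg_form lam" by (rule fs_neg) (rule f1.fs_axioms)

lemma lamr_add: assumes v: "v \<in> H" and a: "a \<in> H" and b: "b \<in> H" shows "lam v (a + b) = lam v a + lam v b"
proof -
  have "lam v (a + b) = lam (a + b) v" using sym v fH.Sadd[OF a b] by blast
  also have "\<dots> = lam a v + lam b v" using addl a b v by blast
  also have "\<dots> = lam v a + lam v b" using sym a b v by simp
  finally show ?thesis .
qed

lemma lamr_zsc: assumes v: "v \<in> H" and w: "w \<in> H" shows "lam v (zsc k w) = k * lam v w"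
proof -
  have "lam v (zsc k w) = lam (zsc k w) v" using sym v subgrp_zsc[OF subH w] by blast
  also have "\<dots> = k * lam w v" using fH.lm_zsc[OF w v] .
  also have "\<dots> = k * lam v w" using sym v w by simp
  finally show ?thesis .
qed

lemma lam_diff: assumes a: "a \<in> H" and b: "b \<in> H" and w: "w \<in> H" shows "lam (a - b) w = lam a w - lam b w"
proof -
  have "lam (a + - b) w = lam a w + lam (- b) w" using addl a fH.Sneg[OF b] w by blast
  then show ?thesis using fH.lm_neg[OF b w] by simp
qed

lemma rho_dual: "S \<subseteq> H \<Longrightarrow> subgrp S \<Longrightarrow> v \<in> H \<Longrightarrow> adj S lam v \<in> dual S"
  unfolding dual_def adj_def dual_of_def
proof (intro CollectI conjI ballI allI impI)
  fix x y assume a: "S \<subseteq> H" "subgrp S" "v \<in> H" "x \<in> S" "y \<in> S"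
  then have "x + y \<in> S" unfolding subgrp_def by blast
  moreover have "lam v (x + y) = lam v x + lam v y" using lamr_add[of v x y] a by blast
  ultimately show "(if x + y \<in> S then lam v (x + y) else 0) = (if x \<in> S then lam v x else 0) + (if y \<in> S then lam v y else 0)"
    using a by simp
qed simp

lemma rho_add: assumes S: "S \<subseteq> H" and v: "v \<in> H" and w: "w \<in> H"
  shows "adj S lam (v + w) = adj S lam v + adj S lam w"
proof
  fix u show "adj S lam (v + w) u = (adj S lam v + adj S lam w) u"
  proof (cases "u \<in> S")
    case True
    then have "lam (v + w) u = lam v u + lam w u" using addl v w S by blast
    then show ?thesis using True unfolding adj_def dual_of_def by simp
  qed (simp add: adj_def dual_of_def)
qed

lemma rho_diff: assumes S: "S \<subseteq> H" and v: "v \<in> H" and w: "w \<in> H"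
  shows "adj S lam (v - w) = adj S lam v - adj S lam w"
proof
  fix u show "adj S lam (v - w) u = (adj S lam v - adj S lam w) u"
  proof (cases "u \<in> S")
    case True
    then have "lam (v - w) u = lam v u - lam w u" using lam_diff v w S by blast
    then show ?thesis using True unfolding adj_def dual_of_def by simp
  qed (simp add: adj_def dual_of_def)
qed

lemma rho_zsc: assumes S: "S \<subseteq> H" and v: "v \<in> H"
  shows "adj S lam (zsc k v) = (\<lambda>u. k * adj S lam v u)"
proof
  fix u show "adj S lam (zsc k v) u = k * adj S lam v u"
  proof (cases "u \<in> S")
    case True
    then have "lam (zsc k v) u = k * lam v u" using fH.lm_zsc v S by blast
    then show ?thesis using True unfolding adj_def dual_of_def by simp
  qed (simp add: adj_def dual_of_def)
qed

lemma rho0_H1: "u \<in> H1 \<Longrightarrow> adj H0 lam u = 0"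
  unfolding adj_def dual_of_def H1_def by (auto simp: fun_eq_iff)

lemma rho1_H0: assumes u: "u \<in> H0" shows "adj H1 lam u = 0"
proof
  fix w show "adj H1 lam u w = 0 w"
  proof (cases "w \<in> H1")
    case True
    then have "lam w u = 0" "w \<in> H" unfolding H1_def using u by auto
    moreover have "u \<in> H" using u H0sub by blast
    ultimately have "lam u w = 0" using sym by metis
    then show ?thesis using True unfolding adj_def dual_of_def by simp
  qed (simp add: adj_def dual_of_def)
qed

lemma rho0_zero: assumes v: "v \<in> H" and z: "adj H0 lam v = 0" shows "v \<in> H1"
proof -
  have "lam v v0 = 0" if "v0 \<in> H0" for v0
    using fun_cong[OF z, of v0] that unfolding adj_def dual_of_def by simp
  then show ?thesis unfolding H1_def using v by blast
qed

lemma basisH0: "\<exists>e m. is_basis e m H0"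
  using fg_free_subgrp[OF fgH H0sub] fg_free_iff by blast

lemma FI: assumes v: "v \<in> H"
  shows "\<exists>r a0 a1. r \<noteq> 0 \<and> a0 \<in> H0 \<and> a1 \<in> H1 \<and> zsc r v = a0 + a1"
proof -
  obtain e m where B: "is_basis e m H0" using basisH0 by blast
  have x: "adj H0 lam v \<in> dual H0" using rho_dual[OF H0sub(2,1) v] .
  obtain r a0 where r: "r \<noteq> 0" "a0 \<in> H0" "(\<lambda>w. r * adj H0 lam v w) = adj H0 lam a0"
    using nondeg_fi[OF B f0.sym f0.add nd0 x] by blast
  define a1 where "a1 = zsc r v - a0"
  have a0H: "a0 \<in> H" using r(2) H0sub(2) by blast
  have a1H: "a1 \<in> H" unfolding a1_def using subgrp_diff[OF subH subgrp_zsc[OF subH v] a0H] .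
  have "lam a1 v0 = 0" if v0: "v0 \<in> H0" for v0
  proof -
    have v0H: "v0 \<in> H" using v0 H0sub(2) by blast
    have "r * adj H0 lam v v0 = adj H0 lam a0 v0" using fun_cong[OF r(3), of v0] by simp
    then have "r * lam v v0 = lam a0 v0" using v0 unfolding adj_def dual_of_def by simp
    moreover have "lam a1 v0 = lam (zsc r v) v0 - lam a0 v0"
      unfolding a1_def using lam_diff[OF subgrp_zsc[OF subH v] a0H v0H] .
    moreover have "lam (zsc r v) v0 = r * lam v v0" using fH.lm_zsc[OF v v0H] .
    ultimately show ?thesis by simp
  qed
  then have "a1 \<in> H1" unfolding H1_def using a1H by blast
  moreover have "zsc r v = a0 + a1" unfolding a1_def by simp
  ultimately show ?thesis using r by blast
qed

lemma perp_zero: assumes v: "v \<in> H" and z0: "adj H0 lam v = 0" and z1: "adj H1 lam v = 0"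
  shows "v = 0"
proof -
  have "lam v w = 0" if w: "w \<in> H" for w
  proof -
    obtain r a0 a1 where ra: "r \<noteq> 0" "a0 \<in> H0" "a1 \<in> H1" "zsc r w = a0 + a1" using FI[OF w] by blast
    have a0H: "a0 \<in> H" and a1H: "a1 \<in> H" using ra H0sub H1sub by blast+
    have "lam v a0 = 0" using fun_cong[OF z0, of a0] ra(2) unfolding adj_def dual_of_def by simp
    moreover have "lam v a1 = 0" using fun_cong[OF z1, of a1] ra(3) unfolding adj_def dual_of_def by simp
    moreover have "r * lam v w = lam v a0 + lam v a1" using lamr_zsc[OF v w, of r] ra(4) lamr_add[OF v a0H a1H] by simp
    ultimately show ?thesis using ra(1) by simp
  qed
  then have "adj H lam v = 0" unfolding adj_def dual_of_def by (auto simp: fun_eq_iff)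
  then show ?thesis using ns v unfolding nonsing_def nondeg_def by blast
qed

lemma H01: "v \<in> H0 \<Longrightarrow> v \<in> H1 \<Longrightarrow> v = 0"
  using nd0 rho0_H1 unfolding nondeg_def by blast

lemma saturated: assumes w: "w \<in> H" and r: "r \<noteq> 0" and rw: "zsc r w \<in> H0" shows "w \<in> H0"
proof -
  obtain K where K: "subgrp K" "K \<subseteq> H" "H0 \<inter> K = {0}" "\<forall>v\<in>H. \<exists>a\<in>H0. \<exists>b\<in>K. v = a + b"
    using ds unfolding direct_summand_def by blast
  have "\<exists>a\<in>H0. \<exists>b\<in>K. w = a + b" using K(4) w by (rule bspec)
  then obtain a b where ab: "a \<in> H0" "b \<in> K" "w = a + b" by blast
  have "zsc r b = zsc r w - zsc r a" using ab(3) by (simp add: zsc_add_right)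
  then have "zsc r b \<in> H0" using subgrp_diff[OF H0sub(1) rw subgrp_zsc[OF H0sub(1) ab(1)]] by simp
  moreover have "zsc r b \<in> K" using subgrp_zsc[OF K(1) ab(2)] .
  ultimately have "zsc r b = 0" using K(3) by blast
  moreover obtain e n where "is_basis e n H" using basisH by blast
  ultimately have "b = 0" using torsion_free r ab(2) K(2) by blast
  then show ?thesis using ab by simp
qed

lemma rho1_zero: assumes v: "v \<in> H" and z: "adj H1 lam v = 0" shows "v \<in> H0"
proof -
  obtain r b0 b1 where rb: "r \<noteq> 0" "b0 \<in> H0" "b1 \<in> H1" "zsc r v = b0 + b1" using FI[OF v] by blast
  have b0H: "b0 \<in> H" and b1H: "b1 \<in> H" using rb H0sub H1sub by blast+
  have "adj H1 lam (zsc r v) = 0" using rho_zsc[OF H1sub(2) v, of r] z by (simp add: fun_eq_iff)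
  then have "adj H1 lam b0 + adj H1 lam b1 = 0" using rb(4) rho_add[OF H1sub(2) b0H b1H] by simp
  then have "adj H1 lam b1 = 0" using rho1_H0[OF rb(2)] by simp
  then have "b1 = 0" using perp_zero[OF b1H rho0_H1[OF rb(3)]] by simp
  then have "zsc r v \<in> H0" using rb by simp
  then show ?thesis using saturated[OF v rb(1)] by blast
qed

end

context main begin

interpretation fH: fs H lam by unfold_locales (use subH sym addl in auto)
interpretation f0: fs H0 lam by unfold_locales (use H0sub sym addl in blast)+
interpretation f1: fs H1 lam by unfold_locales (use H1sub sym addl in blast)+
interpretation f1n: fs H1 "neg_form lam" by (rule fs_neg) (rule f1.fs_axioms)

lemma lc_in_sub: "subgrp S \<Longrightarrow> (\<And>j. j < m \<Longrightarrow> W j \<in> S) \<Longrightarrow> lc W m c \<in> S"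
  unfolding lc_def by (rule subgrp_sum) (auto intro: subgrp_zsc)

lemma lam_lc: assumes W: "\<And>j. j < m \<Longrightarrow> W j \<in> H" and u: "u \<in> H"
  shows "lam (lc W m c) u = (\<Sum>j<m. c j * lam (W j) u)"
proof -
  have f: "\<And>x y. x \<in> H \<Longrightarrow> y \<in> H \<Longrightarrow> lam (x + y) u = lam x u + lam y u" using addl u by blast
  have "lam (lc W m c) u = (\<Sum>j<m. lam (zsc (c j) (W j)) u)"
    unfolding lc_def by (rule hom_sum[OF subH, of "\<lambda>x. lam x u"]) (use f W subgrp_zsc[OF subH] in auto)
  also have "\<dots> = (\<Sum>j<m. c j * lam (W j) u)"
    by (rule sum.cong) (use fH.lm_zsc W u in auto)
  finally show ?thesis .
qed

lemma coord_elem: assumes B: "is_basis e m S" and i: "i < m" and j: "j < m"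
  shows "coord e m (e i) j = (if j = i then 1 else 0)"
proof -
  have "lc e m (\<lambda>j. if j = i then 1 else 0) = (\<Sum>j<m. if j = i then e j else 0)"
    unfolding lc_def by (rule sum.cong) auto
  also have "\<dots> = e i" using i by simp
  finally have "e i = lc e m (\<lambda>j. if j = i then 1 else 0)" by simp
  then show ?thesis using coord_lc[OF B j] by simp
qed

lemma ds1: "direct_summand H1 H"
proof -
  obtain e m where B: "is_basis e m H0" using basisH0 by blast
  define del where "del j = dual_of H0 (\<lambda>u. coord e m u j)" for j
  have deld: "del j \<in> dual H0" if j: "j < m" for j
    unfolding dual_def del_def dual_of_def
  proof (intro CollectI conjI ballI allI impI)
    fix x y assume "x \<in> H0" "y \<in> H0"
    moreover then have "x + y \<in> H0" using f0.Sadd by blast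
    ultimately show "(if x + y \<in> H0 then coord e m (x + y) j else 0) = (if x \<in> H0 then coord e m x j else 0) + (if y \<in> H0 then coord e m y j else 0)"
      using coord_add[OF B _ _ j] by simp
  qed simp
  define W where "W j = (SOME w. w \<in> H \<and> dual_of H0 (lam w) = del j)" for j
  have Wp: "W j \<in> H \<and> dual_of H0 (lam (W j)) = del j" if j: "j < m" for j
  proof -
    have "\<exists>w\<in>H. dual_of H0 (lam w) = del j" using surj_dual[OF ds ns deld[OF j] subH] .
    then have "\<exists>w. w \<in> H \<and> dual_of H0 (lam w) = del j" by blast
    then show ?thesis unfolding W_def by (rule someI_ex)
  qed
  have WH: "j < m \<Longrightarrow> W j \<in> H" for j using Wp by blast
  have Wlam: "lam (W j) u = coord e m u j" if j: "j < m" and u: "u \<in> H0" for j u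
    using fun_cong[OF conjunct2[OF Wp[OF j]], of u] u unfolding del_def dual_of_def by simp
  have eH: "i < m \<Longrightarrow> e i \<in> H" for i using basis_elem[OF B] H0sub by blast
  define K where "K = {v. \<exists>c. v = lc W m c}"
  have lamK: "lam (lc W m c) u = (\<Sum>j<m. c j * coord e m u j)" if u: "u \<in> H0" for c u
  proof -
    have uH: "u \<in> H" using u H0sub by blast
    have "lam (lc W m c) u = (\<Sum>j<m. c j * lam (W j) u)" by (rule lam_lc[OF WH uH])
    also have "\<dots> = (\<Sum>j<m. c j * coord e m u j)" by (rule sum.cong) (use Wlam u in auto)
    finally show ?thesis .
  qed
  have Ksub: "subgrp K" unfolding subgrp_def K_def
  proof (intro conjI ballI)
    have "0 = lc W m (\<lambda>i. 0)" by simp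
    then show "0 \<in> {v. \<exists>c. v = lc W m c}" by blast
  next
    fix x y assume "x \<in> {v. \<exists>c. v = lc W m c}" "y \<in> {v. \<exists>c. v = lc W m c}"
    then obtain c d where "x = lc W m c" "y = lc W m d" by blast
    then have "x + y = lc W m (\<lambda>i. c i + d i)" using lc_add[of W m c d] by simp
    then show "x + y \<in> {v. \<exists>c. v = lc W m c}" by blast
  next
    fix x assume "x \<in> {v. \<exists>c. v = lc W m c}"
    then obtain c where "x = lc W m c" by blast
    then have "- x = lc W m (\<lambda>i. - c i)" using lc_neg[of W m c] by simp
    then show "- x \<in> {v. \<exists>c. v = lc W m c}" by blast
  qed
  have lcH: "lc W m c \<in> H" for c by (rule lc_in_sub[OF subH]) (rule WH)
  have KH: "K \<subseteq> H" unfolding K_def using lcH by blast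
  have int: "H1 \<inter> K = {0}"
  proof
    show "{0} \<subseteq> H1 \<inter> K" using f1.S0 Ksub unfolding subgrp_def by blast
  next
    show "H1 \<inter> K \<subseteq> {0}"
    proof
      fix k assume k: "k \<in> H1 \<inter> K"
      then obtain c where c: "k = lc W m c" unfolding K_def by blast
      have "c i = 0" if i: "i < m" for i
      proof -
        have ei: "e i \<in> H0" using basis_elem[OF B i] .
        have "lam k (e i) = 0" using k ei unfolding H1_def by blast
        moreover have "lam k (e i) = (\<Sum>j<m. c j * coord e m (e i) j)" using lamK[OF ei] c by simp
        moreover have "(\<Sum>j<m. c j * coord e m (e i) j) = (\<Sum>j<m. if j = i then c j else 0)"
          by (rule sum.cong) (use coord_elem[OF B i] in auto)
        ultimately show ?thesis using i by simp
      qed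
      then have "lc W m c = lc W m (\<lambda>i. 0)" by (intro lc_cong) auto
      then show "k \<in> {0}" using c by simp
    qed
  qed
  have span: "\<exists>a\<in>H1. \<exists>b\<in>K. v = a + b" if v: "v \<in> H" for v
  proof -
    define c where "c j = lam v (e j)" for j
    define k where "k = lc W m c"
    have kK: "k \<in> K" unfolding K_def k_def by blast
    have kH: "k \<in> H" using kK KH by blast
    have "v - k \<in> H1" unfolding H1_def
    proof (intro CollectI conjI ballI)
      show "v - k \<in> H" using subgrp_diff[OF subH v kH] .
    next
      fix u assume u: "u \<in> H0"
      have uH: "u \<in> H" using u H0sub by blast
      have u_eq: "u = lc e m (coord e m u)" using coord_spec[OF B u] by simp
      have fadd: "\<And>x y. x \<in> H0 \<Longrightarrow> y \<in> H0 \<Longrightarrow> lam v (x + y) = lam v x + lam v y"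
        using lamr_add v H0sub by blast
      have "lam v u = lam v (lc e m (coord e m u))" using u_eq by simp
      also have "\<dots> = (\<Sum>i<m. coord e m u i * lam v (e i))" using hom_lc_int[OF B fadd] by blast
      finally have l1: "lam v u = (\<Sum>i<m. coord e m u i * c i)" unfolding c_def .
      have l2: "lam k u = (\<Sum>j<m. c j * coord e m u j)" unfolding k_def using lamK[OF u] .
      have "lam (v - k) u = lam v u - lam k u" using lam_diff[OF v kH uH] .
      also have "\<dots> = 0" using l1 l2 by (simp add: mult.commute)
      finally show "lam (v - k) u = 0" .
    qed
    moreover have "v = (v - k) + k" by simp
    ultimately show ?thesis using kK by blast
  qed
  show ?thesis unfolding direct_summand_def using H1sub Ksub KH int span by blast
qed

lemma fam0: "in_family F H0 lam alpha"
proof -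
  have "is_qf H0 lam alpha" unfolding is_qf_def
    using fg_free_subgrp[OF fgH H0sub] sym addl alpha_add H0sub(2) by blast
  then show ?thesis using fam H0sub(2) unfolding in_family_def by (cases F) auto
qed

lemma fam1: "in_family F H1 (neg_form lam) alpha"
proof -
  have "is_qf H1 (neg_form lam) alpha" unfolding is_qf_def
    using fg_free_subgrp[OF fgH H1sub] f1n.sym f1n.add alpha_add H1sub(2) by blast
  moreover have "even (neg_form lam v v + alpha v) \<longleftrightarrow> even (lam v v + alpha v)" for v
  proof -
    have "neg_form lam v v + alpha v = (lam v v + alpha v) - 2 * lam v v" unfolding neg_form_def by simp
    then show ?thesis by auto
  qed
  moreover have "even (neg_form lam v v) \<longleftrightarrow> even (lam v v)" for v unfolding neg_form_def by simp
  ultimately show ?thesis using fam H1sub(2) unfolding in_family_def by (cases F) auto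
qed

lemma nd1n: "nondeg H1 (neg_form lam)"
  unfolding nondeg_def
proof (intro ballI impI)
  fix v assume v: "v \<in> H1" and z: "adj H1 (neg_form lam) v = 0"
  have "adj H1 lam (- v) = 0" using z f1.adj_neg_form[OF v] by simp
  then have "adj H1 lam v = 0" using f1.adj_uminus[OF v] by simp
  moreover have "adj H0 lam v = 0" using rho0_H1[OF v] .
  moreover have "v \<in> H" using v H1sub by blast
  ultimately show "v = 0" using perp_zero by blast
qed

end

context main begin

interpretation fH: fs H lam by unfold_locales (use subH sym addl in auto)
interpretation f0: fs H0 lam by unfold_locales (use H0sub sym addl in blast)+
interpretation f1: fs H1 lam by unfold_locales (use H1sub sym addl in blast)+
interpretation f1n: fs H1 "neg_form lam" by (rule fs_neg) (rule f1.fs_axioms)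

lemma d0: "v \<in> H \<Longrightarrow> adj H0 lam v \<in> dual H0" using rho_dual[OF H0sub(2,1)] .
lemma d1: "v \<in> H \<Longrightarrow> adj H1 lam v \<in> dual H1" using rho_dual[OF H1sub(2,1)] .

lemma H0H: "u \<in> H0 \<Longrightarrow> u \<in> H" using H0sub by blast
lemma H1H: "u \<in> H1 \<Longrightarrow> u \<in> H" using H1sub by blast

lemma cls0_mid: assumes v: "v \<in> H" and w: "w \<in> H"
  shows "cls H0 lam (adj H0 lam v) = cls H0 lam (adj H0 lam w) \<longleftrightarrow> (\<exists>a0\<in>H0. \<exists>a1\<in>H1. v = w + a0 + a1)"
proof
  assume "cls H0 lam (adj H0 lam v) = cls H0 lam (adj H0 lam w)"
  then obtain u0 where u0: "u0 \<in> H0" "adj H0 lam v = adj H0 lam w + adj H0 lam u0"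
    using f0.cls_eq[OF d0[OF v] d0[OF w]] by blast
  have u0H: "u0 \<in> H" using H0H[OF u0(1)] .
  have wu: "w + u0 \<in> H" using fH.Sadd[OF w u0H] .
  have "adj H0 lam (v - (w + u0)) = adj H0 lam v - adj H0 lam (w + u0)" using rho_diff[OF H0sub(2) v wu] .
  also have "\<dots> = 0" using u0(2) rho_add[OF H0sub(2) w u0H] by simp
  finally have "v - (w + u0) \<in> H1" using rho0_zero fH.Sdiff[OF v wu] by blast
  moreover have "v = w + u0 + (v - (w + u0))" by simp
  ultimately show "\<exists>a0\<in>H0. \<exists>a1\<in>H1. v = w + a0 + a1" using u0(1) by blast
next
  assume "\<exists>a0\<in>H0. \<exists>a1\<in>H1. v = w + a0 + a1"
  then obtain a0 a1 where a: "a0 \<in> H0" "a1 \<in> H1" "v = w + a0 + a1" by blast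
  have "adj H0 lam v = adj H0 lam (w + a0 + a1)" using a(3) by simp
  also have "\<dots> = adj H0 lam w + adj H0 lam a0 + adj H0 lam a1"
    using rho_add[OF H0sub(2) fH.Sadd[OF w H0H[OF a(1)]] H1H[OF a(2)]] rho_add[OF H0sub(2) w H0H[OF a(1)]] by simp
  also have "\<dots> = adj H0 lam w + adj H0 lam a0" using rho0_H1[OF a(2)] by simp
  finally show "cls H0 lam (adj H0 lam v) = cls H0 lam (adj H0 lam w)"
    using f0.cls_eq[OF d0[OF v] d0[OF w]] a(1) by blast
qed

lemma cls1_mid: assumes v: "v \<in> H" and w: "w \<in> H"
  shows "cls H1 lam (adj H1 lam v) = cls H1 lam (adj H1 lam w) \<longleftrightarrow> (\<exists>a0\<in>H0. \<exists>a1\<in>H1. v = w + a0 + a1)"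
proof
  assume "cls H1 lam (adj H1 lam v) = cls H1 lam (adj H1 lam w)"
  then obtain u1 where u1: "u1 \<in> H1" "adj H1 lam v = adj H1 lam w + adj H1 lam u1"
    using f1.cls_eq[OF d1[OF v] d1[OF w]] by blast
  have u1H: "u1 \<in> H" using H1H[OF u1(1)] .
  have wu: "w + u1 \<in> H" using fH.Sadd[OF w u1H] .
  have "adj H1 lam (v - (w + u1)) = adj H1 lam v - adj H1 lam (w + u1)" using rho_diff[OF H1sub(2) v wu] .
  also have "\<dots> = 0" using u1(2) rho_add[OF H1sub(2) w u1H] by simp
  finally have "v - (w + u1) \<in> H0" using rho1_zero fH.Sdiff[OF v wu] by blast
  moreover have "v = w + (v - (w + u1)) + u1" by simp
  ultimately show "\<exists>a0\<in>H0. \<exists>a1\<in>H1. v = w + a0 + a1" using u1(1) by blast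
next
  assume "\<exists>a0\<in>H0. \<exists>a1\<in>H1. v = w + a0 + a1"
  then obtain a0 a1 where a: "a0 \<in> H0" "a1 \<in> H1" "v = w + a0 + a1" by blast
  have "adj H1 lam v = adj H1 lam (w + a0 + a1)" using a(3) by simp
  also have "\<dots> = adj H1 lam w + adj H1 lam a0 + adj H1 lam a1"
    using rho_add[OF H1sub(2) fH.Sadd[OF w H0H[OF a(1)]] H1H[OF a(2)]] rho_add[OF H1sub(2) w H0H[OF a(1)]] by simp
  also have "\<dots> = adj H1 lam w + adj H1 lam a1" using rho1_H0[OF a(1)] by simp
  finally show "cls H1 lam (adj H1 lam v) = cls H1 lam (adj H1 lam w)"
    using f1.cls_eq[OF d1[OF v] d1[OF w]] a(2) by blast
qed

lemma cls_equiv: "v \<in> H \<Longrightarrow> w \<in> H \<Longrightarrow>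
   cls H0 lam (adj H0 lam v) = cls H0 lam (adj H0 lam w) \<longleftrightarrow> cls H1 (neg_form lam) (adj H1 lam v) = cls H1 (neg_form lam) (adj H1 lam w)"
  using cls0_mid cls1_mid f1.cls_neg_form d1 by simp

definition theta :: "('v \<Rightarrow> int) set \<Rightarrow> ('v \<Rightarrow> int) set" where
  "theta c = cls H1 (neg_form lam) (adj H1 lam (SOME v. v \<in> H \<and> c = cls H0 lam (adj H0 lam v)))"

lemma theta_cls: assumes v: "v \<in> H" shows "theta (cls H0 lam (adj H0 lam v)) = cls H1 (neg_form lam) (adj H1 lam v)"
proof -
  define v' where "v' = (SOME v'. v' \<in> H \<and> cls H0 lam (adj H0 lam v) = cls H0 lam (adj H0 lam v'))"
  have "\<exists>v'. v' \<in> H \<and> cls H0 lam (adj H0 lam v) = cls H0 lam (adj H0 lam v')" using v by blast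
  then have "v' \<in> H \<and> cls H0 lam (adj H0 lam v) = cls H0 lam (adj H0 lam v')"
    unfolding v'_def by (rule someI_ex)
  then have v': "v' \<in> H" "cls H0 lam (adj H0 lam v) = cls H0 lam (adj H0 lam v')" by blast+
  then have "cls H1 (neg_form lam) (adj H1 lam v) = cls H1 (neg_form lam) (adj H1 lam v')"
    using cls_equiv[OF v v'(1)] by blast
  then show ?thesis unfolding theta_def v'_def by simp
qed

lemma dual0_img: "dual H0 = adj H0 lam ` H"
proof
  show "dual H0 \<subseteq> adj H0 lam ` H"
  proof
    fix x assume "x \<in> dual H0"
    then obtain v where "v \<in> H" "dual_of H0 (lam v) = x" using surj_dual[OF ds ns _ subH] by blast
    then show "x \<in> adj H0 lam ` H" unfolding adj_def by blast
  qed
qed (use d0 in blast)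

lemma dual1_img: "dual H1 = adj H1 lam ` H"
proof
  show "dual H1 \<subseteq> adj H1 lam ` H"
  proof
    fix x assume "x \<in> dual H1"
    then obtain v where "v \<in> H" "dual_of H1 (lam v) = x" using surj_dual[OF ds1 ns _ subH] by blast
    then show "x \<in> adj H1 lam ` H" unfolding adj_def by blast
  qed
qed (use d1 in blast)

lemma car0: "carrier (cok_grp H0 lam) = (\<lambda>v. cls H0 lam (adj H0 lam v)) ` H"
  unfolding cok_grp_def using dual0_img by auto

lemma car1: "carrier (cok_grp H1 (neg_form lam)) = (\<lambda>v. cls H1 (neg_form lam) (adj H1 lam v)) ` H"
  unfolding cok_grp_def using dual1_img by auto

lemma theta_hom: "theta \<in> hom (cok_grp H0 lam) (cok_grp H1 (neg_form lam))"
  unfolding hom_def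
proof (intro CollectI conjI ballI Pi_I)
  fix c assume "c \<in> carrier (cok_grp H0 lam)"
  then have "c \<in> (\<lambda>v. cls H0 lam (adj H0 lam v)) ` H" unfolding car0 .
  then obtain v where v: "v \<in> H" "c = cls H0 lam (adj H0 lam v)" by blast
  then have "theta c = cls H1 (neg_form lam) (adj H1 lam v)" using theta_cls by simp
  then show "theta c \<in> carrier (cok_grp H1 (neg_form lam))" unfolding car1 using v(1) by blast
next
  fix c d assume "c \<in> carrier (cok_grp H0 lam)" "d \<in> carrier (cok_grp H0 lam)"
  then have "c \<in> (\<lambda>v. cls H0 lam (adj H0 lam v)) ` H" "d \<in> (\<lambda>v. cls H0 lam (adj H0 lam v)) ` H" unfolding car0 .
  then obtain v w where v: "v \<in> H" "c = cls H0 lam (adj H0 lam v)" and w: "w \<in> H" "d = cls H0 lam (adj H0 lam w)"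
    by blast
  have vw: "v + w \<in> H" using fH.Sadd[OF v(1) w(1)] .
  have "c \<otimes>\<^bsub>cok_grp H0 lam\<^esub> d = {a + b |a b. a \<in> c \<and> b \<in> d}" unfolding cok_grp_def by simp
  also have "\<dots> = cls H0 lam (adj H0 lam v + adj H0 lam w)" using f0.cls_mult[OF d0[OF v(1)] d0[OF w(1)]] v w by simp
  also have "\<dots> = cls H0 lam (adj H0 lam (v + w))" using rho_add[OF H0sub(2) v(1) w(1)] by simp
  finally have "theta (c \<otimes>\<^bsub>cok_grp H0 lam\<^esub> d) = cls H1 (neg_form lam) (adj H1 lam (v + w))"
    using theta_cls[OF vw] by simp
  also have "\<dots> = cls H1 (neg_form lam) (adj H1 lam v + adj H1 lam w)" using rho_add[OF H1sub(2) v(1) w(1)] by simp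
  also have "\<dots> = {a + b |a b. a \<in> theta c \<and> b \<in> theta d}"
    using f1n.cls_mult[OF d1[OF v(1)] d1[OF w(1)]] theta_cls v w by simp
  also have "\<dots> = theta c \<otimes>\<^bsub>cok_grp H1 (neg_form lam)\<^esub> theta d" unfolding cok_grp_def by simp
  finally show "theta (c \<otimes>\<^bsub>cok_grp H0 lam\<^esub> d) = theta c \<otimes>\<^bsub>cok_grp H1 (neg_form lam)\<^esub> theta d" .
qed

lemma theta_bij: "bij_betw theta (carrier (cok_grp H0 lam)) (carrier (cok_grp H1 (neg_form lam)))"
  unfolding bij_betw_def
proof
  show "inj_on theta (carrier (cok_grp H0 lam))"
  proof (rule inj_onI)
    fix c d assume cd: "c \<in> carrier (cok_grp H0 lam)" "d \<in> carrier (cok_grp H0 lam)" "theta c = theta d"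
    then have "c \<in> (\<lambda>v. cls H0 lam (adj H0 lam v)) ` H" "d \<in> (\<lambda>v. cls H0 lam (adj H0 lam v)) ` H" unfolding car0 by simp_all
    then obtain v w where v: "v \<in> H" "c = cls H0 lam (adj H0 lam v)" and w: "w \<in> H" "d = cls H0 lam (adj H0 lam w)"
      by blast
    have "cls H1 (neg_form lam) (adj H1 lam v) = cls H1 (neg_form lam) (adj H1 lam w)"
      using cd(3) v w theta_cls by simp
    then show "c = d" using cls_equiv[OF v(1) w(1)] v(2) w(2) by simp
  qed
next
  show "theta ` carrier (cok_grp H0 lam) = carrier (cok_grp H1 (neg_form lam))"
    unfolding car0 car1 image_image using theta_cls by (intro image_cong) simp_all
qed

lemma alpha_rep: "\<exists>u\<in>H. adj H lam u = dual_of H alpha"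
proof -
  have "dual_of H alpha \<in> dual H" unfolding dual_def
  proof (intro CollectI conjI ballI allI impI)
    fix x y assume "x \<in> H" "y \<in> H"
    moreover then have "x + y \<in> H" using fH.Sadd by blast
    moreover have "alpha (x + y) = alpha x + alpha y" using alpha_add calculation(1,2) by blast
    ultimately show "dual_of H alpha (x + y) = dual_of H alpha x + dual_of H alpha y" unfolding dual_of_def by simp
  qed (simp add: dual_of_def)
  then show ?thesis using ns unfolding nonsing_def by blast
qed

lemma alpha_restr: assumes u: "u \<in> H" "adj H lam u = dual_of H alpha" and S: "S \<subseteq> H"
  shows "dual_of S alpha = adj S lam u"
proof
  fix w show "dual_of S alpha w = adj S lam u w"
  proof (cases "w \<in> S")
    case True
    then have "w \<in> H" using S by blast
    then have "lam u w = alpha w" using fun_cong[OF u(2), of w] unfolding adj_def dual_of_def by simp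
    then show ?thesis using True unfolding adj_def dual_of_def by simp
  qed (simp add: adj_def dual_of_def)
qed

lemma LV: assumes v: "v \<in> H"
  shows "\<exists>r a0 a1. r \<noteq> 0 \<and> a0 \<in> H0 \<and> a1 \<in> H1 \<and> zsc r v = a0 + a1 \<and>
    (\<forall>y\<in>dual H0. linv H0 lam (adj H0 lam v) y = of_int (y a0) / of_int r) \<and>
    (\<forall>y\<in>dual H1. linv H1 (neg_form lam) (adj H1 lam v) y = - of_int (y a1) / of_int r)"
proof -
  obtain r a0 a1 where ra: "r \<noteq> 0" "a0 \<in> H0" "a1 \<in> H1" "zsc r v = a0 + a1" using FI[OF v] by blast
  have a0H: "a0 \<in> H" using H0H[OF ra(2)] .
  have a1H: "a1 \<in> H" using H1H[OF ra(3)] .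
  have key: "r * lam v w = lam a0 w + lam a1 w" if w: "w \<in> H" for w
  proof -
    have "r * lam v w = lam (zsc r v) w" using fH.lm_zsc[OF v w] by simp
    also have "\<dots> = lam (a0 + a1) w" using ra(4) by simp
    also have "\<dots> = lam a0 w + lam a1 w" using addl a0H a1H w by blast
    finally show ?thesis .
  qed
  have e0: "(\<lambda>w. r * adj H0 lam v w) = adj H0 lam a0"
  proof
    fix w show "r * adj H0 lam v w = adj H0 lam a0 w"
    proof (cases "w \<in> H0")
      case True
      then have "lam a1 w = 0" using ra(3) unfolding H1_def by blast
      then show ?thesis using key[OF H0H[OF True]] True unfolding adj_def dual_of_def by simp
    qed (simp add: adj_def dual_of_def)
  qed
  have e1: "(\<lambda>w. r * adj H1 lam v w) = adj H1 (neg_form lam) (- a1)"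
  proof
    fix w show "r * adj H1 lam v w = adj H1 (neg_form lam) (- a1) w"
    proof (cases "w \<in> H1")
      case True
      have wH: "w \<in> H" using H1H[OF True] .
      have "lam w a0 = 0" using True ra(2) unfolding H1_def by blast
      then have "lam a0 w = 0" using sym wH a0H by simp
      moreover have "neg_form lam (- a1) w = lam a1 w" unfolding neg_form_def using fH.lm_neg[OF a1H wH] by simp
      ultimately show ?thesis using key[OF wH] True unfolding adj_def dual_of_def by simp
    qed (simp add: adj_def dual_of_def)
  qed
  have l0: "linv H0 lam (adj H0 lam v) y = of_int (y a0) / of_int r" if y: "y \<in> dual H0" for y
    using f0.linv_eq[OF nd0 ra(1) ra(2) e0 y] .
  have l1: "linv H1 (neg_form lam) (adj H1 lam v) y = - of_int (y a1) / of_int r" if y: "y \<in> dual H1" for y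
  proof -
    have "linv H1 (neg_form lam) (adj H1 lam v) y = of_int (y (- a1)) / of_int r"
      using f1n.linv_eq[OF nd1n ra(1) f1.Sneg[OF ra(3)] e1 y] .
    moreover have "y (- a1) = - y a1" using dual_neg[OF y H1sub(1) ra(3)] .
    ultimately show ?thesis by simp
  qed
  show ?thesis using ra l0 l1 by blast
qed

lemma int_div: "r \<noteq> 0 \<Longrightarrow> a + b = r * c \<Longrightarrow>
  of_int a / of_int r - (- of_int b / of_int r) = (of_int c :: rat)"
proof -
  assume r: "r \<noteq> 0" and e: "a + b = r * c"
  have "(of_int a + of_int b :: rat) = of_int r * of_int c" using e by (metis of_int_add of_int_mult)
  then show ?thesis using r by (simp add: field_simps)
qed

lemma GF: assumes v: "v \<in> H" and w: "w \<in> H"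
  shows "glue_form H0 lam H1 (neg_form lam) (adj H0 lam v, adj H1 lam v) (adj H0 lam w, adj H1 lam w) = of_int (lam v w)"
proof -
  obtain r a0 a1 where ra: "r \<noteq> 0" "a0 \<in> H0" "a1 \<in> H1" "zsc r v = a0 + a1"
    and l0: "\<forall>y\<in>dual H0. linv H0 lam (adj H0 lam v) y = of_int (y a0) / of_int r"
    and l1: "\<forall>y\<in>dual H1. linv H1 (neg_form lam) (adj H1 lam v) y = - of_int (y a1) / of_int r"
    using LV[OF v] by blast
  have "lam w a0 + lam w a1 = lam w (zsc r v)" using lamr_add[OF w H0H[OF ra(2)] H1H[OF ra(3)]] ra(4) by simp
  also have "\<dots> = r * lam v w" using lamr_zsc[OF w v] sym v w by simp
  finally have E: "lam w a0 + lam w a1 = r * lam v w" .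
  have "glue_form H0 lam H1 (neg_form lam) (adj H0 lam v, adj H1 lam v) (adj H0 lam w, adj H1 lam w)
      = of_int (adj H0 lam w a0) / of_int r - (- of_int (adj H1 lam w a1) / of_int r)"
    unfolding glue_form_def using l0 l1 d0[OF w] d1[OF w] by simp
  also have "\<dots> = of_int (lam w a0) / of_int r - (- of_int (lam w a1) / of_int r)"
    using ra(2,3) unfolding adj_def dual_of_def by simp
  also have "\<dots> = of_int (lam v w)" using int_div[OF ra(1) E] .
  finally show ?thesis .
qed

lemma QV: assumes v: "v \<in> H"
  shows "frac (qval F H1 (neg_form lam) alpha (adj H1 lam v)) = frac (qval F H0 lam alpha (adj H0 lam v))"
proof -
  obtain r a0 a1 where ra: "r \<noteq> 0" "a0 \<in> H0" "a1 \<in> H1" "zsc r v = a0 + a1"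
    and l0: "\<forall>y\<in>dual H0. linv H0 lam (adj H0 lam v) y = of_int (y a0) / of_int r"
    and l1: "\<forall>y\<in>dual H1. linv H1 (neg_form lam) (adj H1 lam v) y = - of_int (y a1) / of_int r"
    using LV[OF v] by blast
  have a0H: "a0 \<in> H" using H0H[OF ra(2)] .
  have a1H: "a1 \<in> H" using H1H[OF ra(3)] .
  have "lam v a0 + lam v a1 = lam v (zsc r v)" using lamr_add[OF v a0H a1H] ra(4) by simp
  also have "\<dots> = r * lam v v" using lamr_zsc[OF v v] by simp
  finally have E1: "lam v a0 + lam v a1 = r * lam v v" .
  have "alpha a0 + alpha a1 = alpha (zsc r v)" using alpha_add a0H a1H ra(4) by simp
  also have "\<dots> = r * alpha v"
    using hom_zsc[OF subH, of alpha v r] alpha_add v by simp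
  finally have E2: "alpha a0 + alpha a1 = r * alpha v" .
  define P0 where "P0 = linv H0 lam (adj H0 lam v) (adj H0 lam v)"
  define P1 where "P1 = linv H1 (neg_form lam) (adj H1 lam v) (adj H1 lam v)"
  define A0 where "A0 = linv H0 lam (adj H0 lam v) (dual_of H0 alpha)"
  define A1 where "A1 = linv H1 (neg_form lam) (adj H1 lam v) (dual_of H1 alpha)"
  have "P0 = of_int (lam v a0) / of_int r" unfolding P0_def using l0 d0[OF v] ra(2) by (simp add: adj_def dual_of_def)
  moreover have "P1 = - of_int (lam v a1) / of_int r" unfolding P1_def using l1 d1[OF v] ra(3) by (simp add: adj_def dual_of_def)
  ultimately have P: "P0 - P1 = of_int (lam v v)" using int_div[OF ra(1) E1] by simp
  have da0: "dual_of H0 alpha \<in> dual H0" and da1: "dual_of H1 alpha \<in> dual H1"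
    using alpha_rep alpha_restr H0sub(2) H1sub(2) d0 d1 by metis+
  have "A0 = of_int (alpha a0) / of_int r" unfolding A0_def using l0 da0 ra(2) by (simp add: dual_of_def)
  moreover have "A1 = - of_int (alpha a1) / of_int r" unfolding A1_def using l1 da1 ra(3) by (simp add: dual_of_def)
  ultimately have A: "A0 - A1 = of_int (alpha v)" using int_div[OF ra(1) E2] by simp
  show ?thesis
  proof (cases F)
    case Fc
    then have "even (lam v v + alpha v)" using fam v unfolding in_family_def by simp
    then obtain k where k: "lam v v + alpha v = 2 * k" by (metis evenE)
    have "qval F H0 lam alpha (adj H0 lam v) = (P0 + A0) / 2" unfolding qval_def P0_def A0_def using Fc by simp
    also have "\<dots> = (P1 + A1) / 2 + of_int k"
    proof -
      have "P0 + A0 = P1 + A1 + of_int (lam v v + alpha v)" using P A by simp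
      then show ?thesis using k by simp
    qed
    also have "(P1 + A1) / 2 = qval F H1 (neg_form lam) alpha (adj H1 lam v)"
      unfolding qval_def P1_def A1_def using Fc by simp
    finally show ?thesis by simp
  next
    case Fev
    then have "even (lam v v)" using fam v unfolding in_family_def by simp
    then obtain k where k: "lam v v = 2 * k" by (metis evenE)
    have "qval F H0 lam alpha (adj H0 lam v) = P0 / 2" unfolding qval_def P0_def using Fev by simp
    also have "\<dots> = P1 / 2 + of_int k" using P k by simp
    also have "P1 / 2 = qval F H1 (neg_form lam) alpha (adj H1 lam v)"
      unfolding qval_def P1_def using Fev by simp
    finally show ?thesis by simp
  next
    case Fo
    then have "even (lam v v)" using fam v unfolding in_family_def by simp
    then obtain k where k: "lam v v = 2 * k" by (metis evenE)
    have "qval F H0 lam alpha (adj H0 lam v) = P0 / 2" unfolding qval_def P0_def using Fo by simp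
    also have "\<dots> = P1 / 2 + of_int k" using P k by simp
    also have "P1 / 2 = qval F H1 (neg_form lam) alpha (adj H1 lam v)"
      unfolding qval_def P1_def using Fo by simp
    finally show ?thesis by simp
  qed
qed

end

context main begin

interpretation fH: fs H lam by unfold_locales (use subH sym addl in auto)
interpretation f0: fs H0 lam by unfold_locales (use H0sub sym addl in blast)+
interpretation f1: fs H1 lam by unfold_locales (use H1sub sym addl in blast)+
interpretation f1n: fs H1 "neg_form lam" by (rule fs_neg) (rule f1.fs_axioms)

lemma qlink_eq: assumes c: "c \<in> carrier (cok_grp H0 lam)"
  shows "qlink F H1 (neg_form lam) alpha (theta c) = qlink F H0 lam alpha c"
proof -
  have "c \<in> (\<lambda>v. cls H0 lam (adj H0 lam v)) ` H" using c unfolding car0 .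
  then obtain v where v: "v \<in> H" "c = cls H0 lam (adj H0 lam v)" by blast
  define x where "x = (SOME x. x \<in> c)"
  have "adj H0 lam v \<in> c" using f0.cls_self[OF d0[OF v(1)]] v(2) by simp
  then have xc: "x \<in> c" unfolding x_def by (rule someI[of "\<lambda>x. x \<in> c"])
  then obtain u0 where u0: "u0 \<in> H0" "x = adj H0 lam v + adj H0 lam u0"
    using f0.cls_mem[OF d0[OF v(1)]] v(2) by blast
  define v2 where "v2 = v + u0"
  have v2H: "v2 \<in> H" unfolding v2_def using fH.Sadd[OF v(1) H0H[OF u0(1)]] .
  have xv2: "x = adj H0 lam v2" unfolding v2_def using u0(2) rho_add[OF H0sub(2) v(1) H0H[OF u0(1)]] by simp
  have cv2: "c = cls H0 lam (adj H0 lam v2)"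
    using f0.cls_of_mem[OF d0[OF v(1)]] xc v(2) xv2 by simp
  have tc: "theta c = cls H1 (neg_form lam) (adj H1 lam v2)" using theta_cls[OF v2H] cv2 by simp
  define y where "y = (SOME y. y \<in> theta c)"
  have "adj H1 lam v2 \<in> theta c" using f1n.cls_self[OF d1[OF v2H]] tc by simp
  then have yc: "y \<in> theta c" unfolding y_def by (rule someI[of "\<lambda>x. x \<in> theta c"])
  then obtain u1 where u1: "u1 \<in> H1" "y = adj H1 lam v2 + adj H1 (neg_form lam) u1"
    using f1n.cls_mem[OF d1[OF v2H]] tc by blast
  have mu1: "- u1 \<in> H1" using f1.Sneg[OF u1(1)] .
  define v3 where "v3 = v2 + - u1"
  have v3H: "v3 \<in> H" unfolding v3_def using fH.Sadd[OF v2H H1H[OF mu1]] .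
  have yv3: "y = adj H1 lam v3"
    unfolding v3_def using u1(2) f1.adj_neg_form[OF u1(1)] rho_add[OF H1sub(2) v2H H1H[OF mu1]] by simp
  have xv3: "x = adj H0 lam v3"
    unfolding v3_def using xv2 rho_add[OF H0sub(2) v2H H1H[OF mu1]] rho0_H1[OF mu1] by simp
  have "qlink F H1 (neg_form lam) alpha (theta c) = frac (qval F H1 (neg_form lam) alpha (adj H1 lam v3))"
    unfolding qlink_def y_def[symmetric] yv3 ..
  also have "\<dots> = frac (qval F H0 lam alpha (adj H0 lam v3))" using QV[OF v3H] .
  also have "\<dots> = qlink F H0 lam alpha c" unfolding qlink_def x_def[symmetric] xv3 ..
  finally show ?thesis .
qed

lemma lf_iso: "lf_isometry F H0 lam alpha H1 (neg_form lam) alpha theta"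
proof -
  obtain u where u: "u \<in> H" "adj H lam u = dual_of H alpha" using alpha_rep by blast
  have a0: "dual_of H0 alpha = adj H0 lam u" using alpha_restr[OF u H0sub(2)] .
  have a1: "dual_of H1 alpha = adj H1 lam u" using alpha_restr[OF u H1sub(2)] .
  have "theta (cls H0 lam (dual_of H0 alpha)) = cls H1 (neg_form lam) (dual_of H1 alpha)"
    using theta_cls[OF u(1)] a0 a1 by simp
  moreover have "theta \<in> iso (cok_grp H0 lam) (cok_grp H1 (neg_form lam))"
    unfolding iso_def using theta_hom theta_bij by blast
  ultimately show ?thesis unfolding lf_isometry_def using qlink_eq by blast
qed

definition phi :: "'v \<Rightarrow> ('v \<Rightarrow> int) \<times> ('v \<Rightarrow> int)" where
  "phi v = (adj H0 lam v, adj H1 lam v)"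

lemma glue_iso: "isometric_to H lam alpha (glue_carrier H0 lam H1 (neg_form lam) theta)
             (glue_form H0 lam H1 (neg_form lam)) (glue_lin H0 lam alpha H1 (neg_form lam) alpha)"
  unfolding isometric_to_def
proof (intro exI conjI ballI)
  show "bij_betw phi H (glue_carrier H0 lam H1 (neg_form lam) theta)"
    unfolding bij_betw_def
  proof
    show "inj_on phi H"
    proof (rule inj_onI)
      fix v w assume v: "v \<in> H" and w: "w \<in> H" and e: "phi v = phi w"
      have "adj H0 lam (v - w) = 0" using e rho_diff[OF H0sub(2) v w] unfolding phi_def by simp
      moreover have "adj H1 lam (v - w) = 0" using e rho_diff[OF H1sub(2) v w] unfolding phi_def by simp
      ultimately have "v - w = 0" using perp_zero fH.Sdiff[OF v w] by blast
      then show "v = w" by simp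
    qed
  next
    show "phi ` H = glue_carrier H0 lam H1 (neg_form lam) theta"
    proof
      show "phi ` H \<subseteq> glue_carrier H0 lam H1 (neg_form lam) theta"
      proof
        fix z assume "z \<in> phi ` H"
        then obtain v where v: "v \<in> H" "z = phi v" by blast
        then show "z \<in> glue_carrier H0 lam H1 (neg_form lam) theta"
          unfolding glue_carrier_def phi_def using d0 d1 theta_cls by simp
      qed
    next
      show "glue_carrier H0 lam H1 (neg_form lam) theta \<subseteq> phi ` H"
      proof
        fix z assume "z \<in> glue_carrier H0 lam H1 (neg_form lam) theta"
        then obtain x0 x1 where z: "z = (x0, x1)" "x0 \<in> dual H0" "x1 \<in> dual H1"
          "theta (cls H0 lam x0) = cls H1 (neg_form lam) x1"
          unfolding glue_carrier_def by blast
        have "x0 \<in> adj H0 lam ` H" using z(2) dual0_img by simp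
        then obtain v where v: "v \<in> H" "x0 = adj H0 lam v" by blast
        have "cls H1 (neg_form lam) (adj H1 lam v) = cls H1 (neg_form lam) x1"
          using z(4) v theta_cls by simp
        then obtain u where u: "u \<in> H1" "adj H1 lam v = x1 + adj H1 (neg_form lam) u"
          using f1n.cls_eq[OF d1[OF v(1)] z(3)] by blast
        have uH: "u \<in> H" using H1H[OF u(1)] .
        have vu: "v + u \<in> H" using fH.Sadd[OF v(1) uH] .
        have "adj H1 (neg_form lam) u = - adj H1 lam u" using f1.adj_neg_form[OF u(1)] f1.adj_uminus[OF u(1)] by simp
        then have "x1 = adj H1 lam v + adj H1 lam u" using u(2) by (simp add: algebra_simps)
        then have "x1 = adj H1 lam (v + u)" using rho_add[OF H1sub(2) v(1) uH] by simp
        moreover have "x0 = adj H0 lam (v + u)" using v(2) rho_add[OF H0sub(2) v(1) uH] rho0_H1[OF u(1)] by simp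
        ultimately have "z = phi (v + u)" unfolding phi_def using z(1) by simp
        then show "z \<in> phi ` H" using vu by blast
      qed
    qed
  qed
next
  fix v w assume v: "v \<in> H" and w: "w \<in> H"
  show "phi (v + w) = phi v + phi w"
    unfolding phi_def using rho_add[OF H0sub(2) v w] rho_add[OF H1sub(2) v w] by simp
next
  fix v w assume v: "v \<in> H" and w: "w \<in> H"
  show "glue_form H0 lam H1 (neg_form lam) (phi v) (phi w) = of_int (lam v w)"
    unfolding phi_def using GF[OF v w] .
next
  fix v assume v: "v \<in> H"
  obtain u where u: "u \<in> H" "adj H lam u = dual_of H alpha" using alpha_rep by blast
  have a0: "dual_of H0 alpha = adj H0 lam u" using alpha_restr[OF u H0sub(2)] .
  have a1: "dual_of H1 alpha = adj H1 lam u" using alpha_restr[OF u H1sub(2)] .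
  have "lam u v = alpha v" using fun_cong[OF u(2), of v] v unfolding adj_def dual_of_def by simp
  then show "glue_lin H0 lam alpha H1 (neg_form lam) alpha (phi v) = of_int (alpha v)"
    unfolding glue_lin_def a0 a1 phi_def using GF[OF u(1) v] by simp
qed

lemma main_result:
  "direct_summand H1 H
    \<and> in_family F H0 lam alpha \<and> nondeg H0 lam
    \<and> in_family F H1 (neg_form lam) alpha \<and> nondeg H1 (neg_form lam)
    \<and> (\<exists>theta. lf_isometry F H0 lam alpha H1 (neg_form lam) alpha theta
         \<and> isometric_to H lam alpha
             (glue_carrier H0 lam H1 (neg_form lam) theta)
             (glue_form H0 lam H1 (neg_form lam))
             (glue_lin H0 lam alpha H1 (neg_form lam) alpha))"
  using ds1 fam0 nd0 fam1 nd1n lf_iso glue_iso by blast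

end

theorem lemma1p4:
  fixes F :: family and H H0 :: "'v::ab_group_add set"
    and lam :: "'v \<Rightarrow> 'v \<Rightarrow> int" and alpha :: "'v \<Rightarrow> int"
  assumes "in_family F H lam alpha"
    and "nonsing H lam"
    and "direct_summand H0 H"
    and "nondeg H0 lam"
  defines "H1 \<equiv> {v \<in> H. \<forall>v0\<in>H0. lam v v0 = 0}"
  shows "direct_summand H1 H
    \<and> in_family F H0 lam alpha \<and> nondeg H0 lam
    \<and> in_family F H1 (neg_form lam) alpha \<and> nondeg H1 (neg_form lam)
    \<and> (\<exists>theta. lf_isometry F H0 lam alpha H1 (neg_form lam) alpha theta
         \<and> isometric_to H lam alpha
             (glue_carrier H0 lam H1 (neg_form lam) theta)
             (glue_form H0 lam H1 (neg_form lam))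
             (glue_lin H0 lam alpha H1 (neg_form lam) alpha))"
proof -
  interpret m: main F H H0 lam alpha H1
    by unfold_locales (use assms in simp_all)
  show ?thesis using m.main_result .
qed

end
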